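(* Let $\Gamma\in\mathbb{N}$ and let $h\in C^1([-\Gamma,\Gamma])$ be real-valued with $h'$ Lipschitz and $h(0)=0$. Then there is a constant $C>0$, depending only on $h$ and $\Gamma$, such that the following holds. Let $G_1,G_2$ be graphs with $n_1$ and $n_2$ nodes, GSOs $\mathbf{\Delta}_1\in\mathbb{R}^{n_1\times n_1}$, $\mathbf{\Delta}_2\in\mathbb{R}^{n_2\times n_2}$ and GWMs $\boldsymbol{A}_1,\boldsymbol{A}_2$ with $\|\boldsymbol{A}_1\|_{\mathbb{C}^{n_1}\to\mathbb{C}^{n_1}}\le\Gamma$ and $\|\boldsymbol{A}_2\|_{\mathbb{C}^{n_2}\to\mathbb{C}^{n_2}}\le\Gamma$. Then for all permutations $\pi_1,\pi_2$ of the node sets, $$\|T_{W_{n_1h(\pi_1(\mathbf{\Delta}_1))}}-T_{W_{n_2h(\pi_2(\mathbf{\Delta}_2))}}\|_{L^2[0,1]\to L^2[0,1]}\le C\,\|T_{W_{\pi_1(\boldsymbol{A}_1)}}-T_{W_{\pi_2(\boldsymbol{A}_2)}}\|_{L^2[0,1]\to L^2[0,1]}.$$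
   Context: A graph with GSO is $G=(V,E,\mathbf{\Delta})$, $V=\{1,\dots,n\}$, $\mathbf{\Delta}\in\mathbb{R}^{n\times n}$ symmetric; GWM $\boldsymbol{A}=n\mathbf{\Delta}$. $h(\mathbf{\Delta})$ is functional calculus via an orthonormal eigendecomposition (the eigenvalues of $\mathbf{\Delta}$ lie in $[-\Gamma,\Gamma]$ under the hypotheses). For a permutation $\pi$, $\pi(\boldsymbol{B})=(\boldsymbol{B}_{\pi(i)\pi(j)})_{ij}$. With $P_k=[(k-1)/n,k/n)$, $W_{\boldsymbol{B}}(u,v)=\sum_{i,j}\boldsymbol{B}_{ij}\chi_{P_i}(u)\chi_{P_j}(v)$ for $\boldsymbol{B}\in\mathbb{R}^{n\times n}$, and $T_W\psi(v)=\int_0^1W(v,u)\psi(u)du$ on $L^2[0,1]$. *)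

theory Defs
  imports "HOL-Analysis.Analysis"
begin

text \<open>Square matrices of size n are represented as functions nat \<Rightarrow> nat \<Rightarrow> real;
  only the entries with indices < n are relevant (nodes are 0,...,n-1).\<close>

definition sym_mat :: "nat \<Rightarrow> (nat \<Rightarrow> nat \<Rightarrow> real) \<Rightarrow> bool" where
  "sym_mat n B \<longleftrightarrow> (\<forall>i<n. \<forall>j<n. B i j = B j i)"

definition orth_eigendecomp ::
  "nat \<Rightarrow> (nat \<Rightarrow> nat \<Rightarrow> real) \<Rightarrow> (nat \<Rightarrow> nat \<Rightarrow> real) \<Rightarrow> (nat \<Rightarrow> real) \<Rightarrow> bool" where
  "orth_eigendecomp n B U lam \<longleftrightarrow>
     (\<forall>i<n. \<forall>j<n. (\<Sum>k<n. U k i * U k j) = (if i = j then 1 else 0)) \<and>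
     (\<forall>i<n. \<forall>j<n. B i j = (\<Sum>k<n. lam k * U i k * U j k))"

definition mat_fun :: "(real \<Rightarrow> real) \<Rightarrow> nat \<Rightarrow> (nat \<Rightarrow> nat \<Rightarrow> real) \<Rightarrow> (nat \<Rightarrow> nat \<Rightarrow> real)" where
  "mat_fun h n B =
     (let (U, lam) = (SOME (U, lam). orth_eigendecomp n B U lam)
      in (\<lambda>i j. if i < n \<and> j < n then (\<Sum>k<n. h (lam k) * U i k * U j k) else 0))"

definition mat_opnorm :: "nat \<Rightarrow> (nat \<Rightarrow> nat \<Rightarrow> real) \<Rightarrow> real" where
  "mat_opnorm n B =
     (SUP x \<in> {x :: nat \<Rightarrow> complex. (\<Sum>i<n. (cmod (x i))\<^sup>2) \<le> 1}.
        sqrt (\<Sum>i<n. (cmod (\<Sum>j<n. complex_of_real (B i j) * x j))\<^sup>2))"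

definition perm_mat :: "(nat \<Rightarrow> nat) \<Rightarrow> (nat \<Rightarrow> nat \<Rightarrow> real) \<Rightarrow> (nat \<Rightarrow> nat \<Rightarrow> real)" where
  "perm_mat \<pi> B = (\<lambda>i j. B (\<pi> i) (\<pi> j))"

definition scale_mat :: "real \<Rightarrow> (nat \<Rightarrow> nat \<Rightarrow> real) \<Rightarrow> (nat \<Rightarrow> nat \<Rightarrow> real)" where
  "scale_mat c B = (\<lambda>i j. c * B i j)"

text \<open>Interval P_k (0-based: node k corresponds to [k/n,(k+1)/n)).\<close>
definition part_int :: "nat \<Rightarrow> nat \<Rightarrow> real set" where
  "part_int n k = {real k / real n ..< real (Suc k) / real n}"

definition step_graphon :: "nat \<Rightarrow> (nat \<Rightarrow> nat \<Rightarrow> real) \<Rightarrow> real \<Rightarrow> real \<Rightarrow> real" where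
  "step_graphon n B u v =
     (\<Sum>i<n. \<Sum>j<n. B i j * indicator (part_int n i) u * indicator (part_int n j) v)"

definition int_op :: "(real \<Rightarrow> real \<Rightarrow> real) \<Rightarrow> (real \<Rightarrow> real) \<Rightarrow> real \<Rightarrow> real" where
  "int_op W \<psi> v = (LINT u:{0..1}|lborel. W v u * \<psi> u)"

definition L2_0_1 :: "(real \<Rightarrow> real) set" where
  "L2_0_1 = {\<psi>. \<psi> \<in> borel_measurable lborel \<and> set_integrable lborel {0..1} (\<lambda>x. (\<psi> x)\<^sup>2)}"

definition L2_norm :: "(real \<Rightarrow> real) \<Rightarrow> real" where
  "L2_norm f = sqrt (LINT x:{0..1}|lborel. (f x)\<^sup>2)"

definition L2_opnorm :: "((real \<Rightarrow> real) \<Rightarrow> (real \<Rightarrow> real)) \<Rightarrow> real" where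
  "L2_opnorm T = (SUP \<psi> \<in> {\<psi> \<in> L2_0_1. L2_norm \<psi> \<le> 1}. L2_norm (T \<psi>))"

definition op_diff :: "((real \<Rightarrow> real) \<Rightarrow> (real \<Rightarrow> real)) \<Rightarrow> ((real \<Rightarrow> real) \<Rightarrow> (real \<Rightarrow> real))
    \<Rightarrow> ((real \<Rightarrow> real) \<Rightarrow> (real \<Rightarrow> real))" where
  "op_diff S T = (\<lambda>\<psi> v. S \<psi> v - T \<psi> v)"

end

theory Submission
  imports Defs "Jordan_Normal_Form.Char_Poly"
begin

definition mm :: "nat \<Rightarrow> (nat \<Rightarrow> nat \<Rightarrow> real) \<Rightarrow> (nat \<Rightarrow> nat \<Rightarrow> real) \<Rightarrow> (nat \<Rightarrow> nat \<Rightarrow> real)" where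
  "mm m A B = (\<lambda>i j. \<Sum>k<m. A i k * B k j)"
definition trm :: "(nat \<Rightarrow> nat \<Rightarrow> real) \<Rightarrow> (nat \<Rightarrow> nat \<Rightarrow> real)" where
  "trm A = (\<lambda>i j. A j i)"
definition idm :: "nat \<Rightarrow> nat \<Rightarrow> real" where
  "idm = (\<lambda>i j. if i = j then 1 else 0)"
definition diagm :: "(nat \<Rightarrow> real) \<Rightarrow> nat \<Rightarrow> nat \<Rightarrow> real" where
  "diagm lam = (\<lambda>i j. if i = j then lam i else 0)"
definition eqm :: "nat \<Rightarrow> (nat \<Rightarrow> nat \<Rightarrow> real) \<Rightarrow> (nat \<Rightarrow> nat \<Rightarrow> real) \<Rightarrow> bool" where
  "eqm m A B \<longleftrightarrow> (\<forall>i<m. \<forall>j<m. A i j = B i j)"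

lemma eqm_refl[simp]: "eqm m A A" by (simp add: eqm_def)
lemma eqm_sym: "eqm m A B \<Longrightarrow> eqm m B A" by (simp add: eqm_def)
lemma eqm_trans: "eqm m A B \<Longrightarrow> eqm m B C \<Longrightarrow> eqm m A C" by (simp add: eqm_def)

lemma mm_assoc: "mm m (mm m A B) C = mm m A (mm m B C)"
proof (intro ext)
  fix i j
  have "mm m (mm m A B) C i j = (\<Sum>k<m. \<Sum>l<m. A i l * B l k * C k j)"
    unfolding mm_def by (simp add: sum_distrib_right)
  also have "\<dots> = (\<Sum>l<m. \<Sum>k<m. A i l * B l k * C k j)" by (rule sum.swap)
  also have "\<dots> = mm m A (mm m B C) i j"
    unfolding mm_def by (simp add: sum_distrib_left mult.assoc)
  finally show "mm m (mm m A B) C i j = mm m A (mm m B C) i j" .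
qed

lemma trm_mm: "trm (mm m A B) = mm m (trm B) (trm A)"
  unfolding mm_def trm_def by (intro ext) (simp add: mult.commute)

lemma trm_trm[simp]: "trm (trm A) = A" by (simp add: trm_def)

lemma eqm_mm: "eqm m A A' \<Longrightarrow> eqm m B B' \<Longrightarrow> eqm m (mm m A B) (mm m A' B')"
  unfolding eqm_def mm_def by auto

lemma eqm_trm: "eqm m A B \<Longrightarrow> eqm m (trm A) (trm B)"
  unfolding eqm_def trm_def by auto

lemma sum_delta_l: "i < (m::nat) \<Longrightarrow> (\<Sum>k<m. (if i = k then 1 else 0) * f k) = (f i::real)"
proof -
  assume i: "i < m"
  have "(\<Sum>k<m. (if i = k then 1 else 0) * f k) = (\<Sum>k<m. if i = k then f i else 0)"
    by (rule sum.cong) auto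
  also have "\<dots> = f i" using i by simp
  finally show ?thesis .
qed

lemma sum_delta_r: "j < (m::nat) \<Longrightarrow> (\<Sum>k<m. f k * (if k = j then 1 else 0)) = (f j::real)"
proof -
  assume j: "j < m"
  have "(\<Sum>k<m. f k * (if k = j then 1 else 0)) = (\<Sum>k<m. if j = k then f j else 0)"
    by (rule sum.cong) auto
  also have "\<dots> = f j" using j by simp
  finally show ?thesis .
qed

lemma mm_idm_left: "eqm m (mm m idm A) A"
  unfolding eqm_def mm_def idm_def by (auto simp: sum_delta_l)

lemma mm_idm_right: "eqm m (mm m A idm) A"
  unfolding eqm_def mm_def idm_def by (auto simp: sum_delta_r)

lemma mm_diag: "mm m (mm m U (diagm lam)) (trm U) i j = (\<Sum>k<m. lam k * U i k * U j k)"
proof -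
  have "mm m U (diagm lam) i k = U i k * lam k" if "k < m" for k
  proof -
    have "mm m U (diagm lam) i k = (\<Sum>l<m. U i l * lam k * (if l = k then 1 else 0))"
      unfolding mm_def diagm_def by (intro sum.cong refl) auto
    thus ?thesis using that sum_delta_r[OF that, of "\<lambda>l. U i l * lam k"] by simp
  qed
  thus ?thesis unfolding mm_def[of m "mm m U (diagm lam)"] trm_def
    by (intro sum.cong refl) (simp add: mult.commute mult.left_commute)
qed

lemma orth_eigendecomp_iff:
  "orth_eigendecomp n B U lam \<longleftrightarrow> eqm n (mm n (trm U) U) idm \<and> eqm n B (mm n (mm n U (diagm lam)) (trm U))"
  unfolding orth_eigendecomp_def eqm_def mm_diag
  by (simp add: mm_def trm_def idm_def)

lemma complex_eigenpair:
  fixes B :: "nat \<Rightarrow> nat \<Rightarrow> real" assumes n: "n > 0"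
  shows "\<exists>(e::complex) (v::nat \<Rightarrow> complex). (\<exists>i<n. v i \<noteq> 0) \<and>
           (\<forall>i<n. (\<Sum>j<n. complex_of_real (B i j) * v j) = e * v i)"
proof -
  define M where "M = mat n n (\<lambda>(i,j). complex_of_real (B i j))"
  have M: "M \<in> carrier_mat n n" unfolding M_def by simp
  have "degree (char_poly M) = n" using degree_monic_char_poly[OF M] by simp
  hence "\<not> constant (poly (char_poly M))" using n by (simp add: constant_degree)
  then obtain e where "poly (char_poly M) e = 0" using fundamental_theorem_of_algebra by blast
  hence "eigenvalue M e" using eigenvalue_root_char_poly[OF M] by simp
  then obtain v where ev: "eigenvector M v e" unfolding eigenvalue_def by blast
  hence v: "v \<in> carrier_vec n" and v0: "v \<noteq> 0\<^sub>v n" and Mv: "M *\<^sub>v v = e \<cdot>\<^sub>v v"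
    using M unfolding eigenvector_def by auto
  have "\<exists>i<n. Matrix.vec_index v i \<noteq> 0"
  proof (rule ccontr)
    assume "\<not> ?thesis"
    hence "v = 0\<^sub>v n" using v by (intro eq_vecI) auto
    with v0 show False by simp
  qed
  moreover have "\<forall>i<n. (\<Sum>j<n. complex_of_real (B i j) * Matrix.vec_index v j) = e * Matrix.vec_index v i"
  proof (intro allI impI)
    fix i assume i: "i < n"
    have "Matrix.vec_index (M *\<^sub>v v) i = e * Matrix.vec_index v i" using Mv i v by simp
    moreover have "Matrix.vec_index (M *\<^sub>v v) i = (\<Sum>j<n. complex_of_real (B i j) * Matrix.vec_index v j)"
      using i v M unfolding M_def
      by (simp add: scalar_prod_def atLeast0LessThan)
    ultimately show "(\<Sum>j<n. complex_of_real (B i j) * Matrix.vec_index v j) = e * Matrix.vec_index v i" by simp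
  qed
  ultimately show ?thesis by blast
qed

lemma real_eigvec:
  fixes B :: "nat \<Rightarrow> nat \<Rightarrow> real" assumes n: "n > 0" and sym: "sym_mat n B"
  shows "\<exists>x lam. (\<Sum>i<n. (x i)\<^sup>2) = 1 \<and> (\<forall>i<n. (\<Sum>j<n. B i j * x j) = lam * x i)"
proof -
  obtain e v where vnz: "\<exists>i<n. v i \<noteq> 0" and ev: "\<And>i. i<n \<Longrightarrow> (\<Sum>j<n. complex_of_real (B i j) * v j) = e * v i"
    using complex_eigenpair[OF n, of B] by blast
  define S where "S = (\<Sum>i<n. cnj (v i) * (\<Sum>j<n. complex_of_real (B i j) * v j))"
  define s where "s = (\<Sum>i<n. (cmod (v i))\<^sup>2)"
  have "S = (\<Sum>i<n. e * (v i * cnj (v i)))" unfolding S_def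
    by (intro sum.cong refl) (simp add: ev[symmetric])
  also have "\<dots> = (\<Sum>i<n. e * complex_of_real ((cmod (v i))\<^sup>2))"
    by (simp only: complex_norm_square)
  also have "\<dots> = e * complex_of_real s"
    by (simp only: s_def of_real_sum sum_distrib_left)
  finally have S1: "S = e * complex_of_real s" .
  have "cnj S = (\<Sum>i<n. v i * (\<Sum>j<n. complex_of_real (B i j) * cnj (v j)))"
    unfolding S_def by (simp add: cnj_sum)
  also have "\<dots> = (\<Sum>i<n. \<Sum>j<n. complex_of_real (B i j) * v i * cnj (v j))"
    by (simp add: sum_distrib_left mult.commute mult.left_commute)
  also have "\<dots> = (\<Sum>j<n. \<Sum>i<n. complex_of_real (B i j) * v i * cnj (v j))"
    by (rule sum.swap)
  also have "\<dots> = (\<Sum>j<n. \<Sum>i<n. complex_of_real (B j i) * v i * cnj (v j))"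
    using sym unfolding sym_mat_def by (intro sum.cong refl) auto
  also have "\<dots> = S" unfolding S_def
    by (simp add: sum_distrib_left mult.commute mult.left_commute)
  finally have "cnj S = S" .
  hence "Im (cnj S) = Im S" by simp
  hence ImS: "Im S = 0" by simp
  have spos: "s > 0"
  proof -
    obtain i where i: "i < n" "v i \<noteq> 0" using vnz by blast
    have "(cmod (v i))\<^sup>2 > 0" using i by simp
    moreover have "(cmod (v i))\<^sup>2 \<le> s" unfolding s_def
      by (rule member_le_sum) (use i in auto)
    ultimately show ?thesis by linarith
  qed
  have "Im S = Im e * s" using S1 by simp
  hence Ime: "Im e = 0" using ImS spos by simp
  have evRe: "(\<Sum>j<n. B i j * Re (v j)) = Re e * Re (v i)" if i: "i < n" for i
  proof -
    have "Re (\<Sum>j<n. complex_of_real (B i j) * v j) = Re (e * v i)" using ev[OF i] by simp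
    thus ?thesis using Ime by (simp add: Re_sum)
  qed
  have evIm: "(\<Sum>j<n. B i j * Im (v j)) = Re e * Im (v i)" if i: "i < n" for i
  proof -
    have "Im (\<Sum>j<n. complex_of_real (B i j) * v j) = Im (e * v i)" using ev[OF i] by simp
    thus ?thesis using Ime by (simp add: Im_sum)
  qed
  obtain y where ynz: "\<exists>i<n. y i \<noteq> 0" and yev: "\<And>i. i<n \<Longrightarrow> (\<Sum>j<n. B i j * y j) = Re e * y i"
  proof (cases "\<exists>i<n. Re (v i) \<noteq> 0")
    case True thus ?thesis using that[of "\<lambda>i. Re (v i)"] evRe by blast
  next
    case False
    then obtain i where "i < n" "Im (v i) \<noteq> 0" using vnz complex_eqI by (metis zero_complex.sel)
    thus ?thesis using that[of "\<lambda>i. Im (v i)"] evIm by blast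
  qed
  define t where "t = (\<Sum>i<n. (y i)\<^sup>2)"
  have tpos: "t > 0"
  proof -
    obtain i where i: "i < n" "y i \<noteq> 0" using ynz by blast
    have "(y i)\<^sup>2 > 0" using i by simp
    moreover have "(y i)\<^sup>2 \<le> t" unfolding t_def
      by (rule member_le_sum) (use i in auto)
    ultimately show ?thesis by linarith
  qed
  define x where "x i = y i / sqrt t" for i
  have "(\<Sum>i<n. (x i)\<^sup>2) = (\<Sum>i<n. (y i)\<^sup>2) / t"
    unfolding x_def using tpos by (simp add: power_divide sum_divide_distrib)
  hence "(\<Sum>i<n. (x i)\<^sup>2) = 1" using tpos unfolding t_def by simp
  moreover have "\<forall>i<n. (\<Sum>j<n. B i j * x j) = Re e * x i"
  proof (intro allI impI)
    fix i assume i: "i < n"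
    have "(\<Sum>j<n. B i j * x j) = (\<Sum>j<n. B i j * y j) / sqrt t"
      unfolding x_def by (simp add: sum_divide_distrib)
    also have "\<dots> = Re e * x i" using yev[OF i] unfolding x_def by simp
    finally show "(\<Sum>j<n. B i j * x j) = Re e * x i" .
  qed
  ultimately show ?thesis by blast
qed

lemma householder:
  fixes x :: "nat \<Rightarrow> real" assumes x: "(\<Sum>i<m. (x i)\<^sup>2) = 1" and m: "0 < m"
  shows "\<exists>Q. trm Q = Q \<and> eqm m (mm m Q Q) idm \<and> (\<forall>i<m. Q i 0 = x i)"
proof -
  define w where "w i = x i - (if i = 0 then 1 else 0)" for i
  define s where "s = (\<Sum>i<m. (w i)\<^sup>2)"
  define c where "c = 2 / s"
  define Q where "Q i j = idm i j - c * w i * w j" for i j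
  have "trm Q = Q" unfolding trm_def Q_def idm_def by (intro ext) auto
  moreover have "eqm m (mm m Q Q) idm"
    unfolding eqm_def
  proof (intro allI impI)
    fix i j assume i: "i < m" and j: "j < m"
    have "mm m Q Q i j = (\<Sum>k<m. idm i k * idm k j) - (\<Sum>k<m. idm i k * (c * w k * w j))
         - (\<Sum>k<m. c * w i * w k * idm k j) + c * c * w i * w j * s"
    proof -
      have e: "Q i k * Q k j = idm i k * idm k j - idm i k * (c * w k * w j)
         - c * w i * w k * idm k j + c * c * w i * w j * (w k)\<^sup>2" for k
        unfolding Q_def by (simp add: algebra_simps power2_eq_square)
      have "mm m Q Q i j = (\<Sum>k<m. idm i k * idm k j - idm i k * (c * w k * w j)
         - c * w i * w k * idm k j + c * c * w i * w j * (w k)\<^sup>2)"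
        unfolding mm_def e by simp
      also have "\<dots> = (\<Sum>k<m. idm i k * idm k j) - (\<Sum>k<m. idm i k * (c * w k * w j))
         - (\<Sum>k<m. c * w i * w k * idm k j) + c * c * w i * w j * s"
        unfolding s_def by (simp only: sum.distrib sum_subtractf sum_distrib_left)
      finally show ?thesis .
    qed
    also have "(\<Sum>k<m. idm i k * idm k j) = idm i j"
      using sum_delta_l[OF i, of "\<lambda>k. idm k j"] unfolding idm_def by simp
    also have "(\<Sum>k<m. idm i k * (c * w k * w j)) = c * w i * w j"
      using sum_delta_l[OF i, of "\<lambda>k. c * w k * w j"] unfolding idm_def by simp
    also have "(\<Sum>k<m. c * w i * w k * idm k j) = c * w i * w j"
      using sum_delta_r[OF j, of "\<lambda>k. c * w i * w k"] unfolding idm_def by simp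
    also have "c * c * w i * w j * s = 2 * c * w i * w j"
    proof (cases "s = 0")
      case True thus ?thesis unfolding c_def by simp
    next
      case False thus ?thesis unfolding c_def by (simp add: field_simps)
    qed
    finally show "mm m Q Q i j = idm i j" by simp
  qed
  moreover have "\<forall>i<m. Q i 0 = x i"
  proof (intro allI impI)
    fix i assume i: "i < m"
    have s2: "s = 2 - 2 * x 0"
    proof -
      have wi: "(w i)\<^sup>2 = (x i)\<^sup>2 - 2 * (x i * (if i = 0 then 1 else 0)) + (if i = 0 then 1 else 0)" for i
        unfolding w_def by (cases "i = 0") (simp_all add: power2_eq_square algebra_simps)
      have "s = (\<Sum>i<m. (x i)\<^sup>2) - 2 * (\<Sum>i<m. x i * (if i = 0 then 1 else 0)) + (\<Sum>i<m. (if i = 0 then 1 else 0))"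
        unfolding s_def wi by (simp only: sum.distrib sum_subtractf sum_distrib_left)
      also have "(\<Sum>i<m. x i * (if i = 0 then 1 else 0)) = x 0" using sum_delta_r[OF m] by simp
      also have "(\<Sum>i<m. (if i = 0 then 1 else (0::real))) = 1" using m by simp
      finally show ?thesis using x by simp
    qed
    show "Q i 0 = x i"
    proof (cases "s = 0")
      case True
      have "\<forall>k\<in>{..<m}. (w k)\<^sup>2 = 0"
        using True unfolding s_def by (subst (asm) sum_nonneg_eq_0_iff) auto
      hence "w i = 0" using i by simp
      thus ?thesis unfolding Q_def c_def idm_def w_def using True by (auto split: if_splits)
    next
      case False
      have "c * w 0 = -1" unfolding c_def w_def using False s2 by (simp add: field_simps)
      have "Q i 0 = idm i 0 - (c * w 0) * w i" unfolding Q_def by (simp add: algebra_simps)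
      hence "Q i 0 = idm i 0 + w i" using \<open>c * w 0 = -1\<close> by simp
      thus ?thesis unfolding idm_def w_def by simp
    qed
  qed
  ultimately show ?thesis by blast
qed

lemma spectral: "sym_mat n B \<Longrightarrow> \<exists>U lam. orth_eigendecomp n B U lam"
proof (induction n arbitrary: B)
  case 0 thus ?case by (simp add: orth_eigendecomp_def)
next
  case (Suc n)
  define m where "m = Suc n"
  have m: "0 < m" unfolding m_def by simp
  have symB: "sym_mat m B" using Suc.prems unfolding m_def .
  obtain x lam0 where x1: "(\<Sum>i<m. (x i)\<^sup>2) = 1" and xev: "\<And>i. i<m \<Longrightarrow> (\<Sum>j<m. B i j * x j) = lam0 * x i"
    using real_eigvec[OF m symB] by blast
  obtain Q where Qs: "trm Q = Q" and QQ: "eqm m (mm m Q Q) idm" and Q0: "\<And>i. i<m \<Longrightarrow> Q i 0 = x i"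
    using householder[OF x1 m] by blast
  have Qsym: "Q i j = Q j i" for i j
  proof -
    have "trm Q j i = Q j i" using Qs by simp
    thus ?thesis unfolding trm_def .
  qed
  define C where "C = mm m (mm m Q B) Q"
  have C0: "C 0 j = (if j = 0 then lam0 else 0)" if j: "j < m" for j
  proof -
    have "C 0 j = (\<Sum>k<m. (\<Sum>l<m. x l * B l k) * Q k j)"
      unfolding C_def mm_def by (intro sum.cong refl) (simp add: Qsym[of 0] Q0)
    also have "\<dots> = (\<Sum>k<m. (lam0 * x k) * Q k j)"
    proof (intro sum.cong refl)
      fix k assume k: "k \<in> {..<m}"
      have "(\<Sum>l<m. x l * B l k) = (\<Sum>l<m. B k l * x l)"
        using symB k unfolding sym_mat_def by (intro sum.cong refl) auto
      also have "\<dots> = lam0 * x k" using xev k by simp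
      finally show "(\<Sum>l<m. x l * B l k) * Q k j = (lam0 * x k) * Q k j" by simp
    qed
    also have "\<dots> = lam0 * mm m Q Q 0 j"
      unfolding mm_def by (simp add: sum_distrib_left Q0[symmetric] Qsym[of 0] mult.assoc)
    also have "\<dots> = lam0 * idm 0 j" using QQ m j unfolding eqm_def by simp
    finally show ?thesis unfolding idm_def by simp
  qed
  have Csym: "C i j = C j i" if "i < m" "j < m" for i j
  proof -
    have "eqm m (trm B) B" using symB unfolding eqm_def sym_mat_def trm_def by auto
    hence "eqm m (mm m (mm m Q (trm B)) Q) C" unfolding C_def by (intro eqm_mm) auto
    moreover have "trm C = mm m (mm m Q (trm B)) Q" unfolding C_def
      by (simp add: trm_mm Qs mm_assoc)
    ultimately have "eqm m (trm C) C" by simp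
    thus ?thesis using that unfolding eqm_def trm_def by simp
  qed
  define A' where "A' i j = C (Suc i) (Suc j)" for i j
  have "sym_mat n A'" unfolding sym_mat_def A'_def using Csym m_def by auto
  then obtain U' lam' where U': "orth_eigendecomp n A' U' lam'" using Suc.IH by blast
  define V where "V i j = (if i = 0 then (if j = 0 then 1 else 0) else if j = 0 then 0 else U' (i - 1) (j - 1))" for i j
  define lam where "lam k = (if k = 0 then lam0 else lam' (k - 1))" for k
  have VV: "eqm m (mm m (trm V) V) idm"
    unfolding eqm_def
  proof (intro allI impI)
    fix i j assume i: "i < m" and j: "j < m"
    have "mm m (trm V) V i j = V 0 i * V 0 j + (\<Sum>k<n. V (Suc k) i * V (Suc k) j)"
      unfolding mm_def trm_def m_def sum.lessThan_Suc_shift by simp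
    also have "\<dots> = idm i j"
    proof (cases i)
      case 0 thus ?thesis by (simp add: V_def idm_def)
    next
      case (Suc i')
      show ?thesis
      proof (cases j)
        case 0 thus ?thesis using Suc by (simp add: V_def idm_def)
      next
        case (Suc j')
        have "i' < n" "j' < n" using i j \<open>i = Suc i'\<close> Suc m_def by auto
        thus ?thesis using U' \<open>i = Suc i'\<close> Suc unfolding orth_eigendecomp_def
          by (simp add: V_def idm_def)
      qed
    qed
    finally show "mm m (trm V) V i j = idm i j" .
  qed
  have CV: "eqm m C (mm m (mm m V (diagm lam)) (trm V))"
    unfolding eqm_def mm_diag
  proof (intro allI impI)
    fix i j assume i: "i < m" and j: "j < m"
    have e: "(\<Sum>k<m. lam k * V i k * V j k) = lam 0 * V i 0 * V j 0 + (\<Sum>k<n. lam (Suc k) * V i (Suc k) * V j (Suc k))"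
      unfolding m_def sum.lessThan_Suc_shift by simp
    show "C i j = (\<Sum>k<m. lam k * V i k * V j k)"
    proof (cases i)
      case 0 thus ?thesis unfolding e using C0[OF j] by (simp add: V_def lam_def)
    next
      case (Suc i')
      show ?thesis
      proof (cases j)
        case 0 thus ?thesis unfolding e using C0[OF i] Csym[OF i j] \<open>i = Suc i'\<close> by (simp add: V_def lam_def)
      next
        case (Suc j')
        have "i' < n" "j' < n" using i j \<open>i = Suc i'\<close> Suc m_def by auto
        hence "A' i' j' = (\<Sum>k<n. lam' k * U' i' k * U' j' k)" using U' unfolding orth_eigendecomp_def by blast
        thus ?thesis unfolding e using \<open>i = Suc i'\<close> Suc by (simp add: V_def lam_def A'_def)
      qed
    qed
  qed
  define U where "U = mm m Q V"
  have trU: "trm U = mm m (trm V) Q" unfolding U_def by (simp add: trm_mm Qs)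
  have UU: "eqm m (mm m (trm U) U) idm"
  proof -
    have "mm m (trm U) U = mm m (trm V) (mm m (mm m Q Q) V)" unfolding trU by (simp add: U_def mm_assoc)
    moreover have "eqm m (mm m (mm m Q Q) V) V"
      by (rule eqm_trans[OF eqm_mm[OF QQ eqm_refl] mm_idm_left])
    ultimately have "eqm m (mm m (trm U) U) (mm m (trm V) V)" by (simp add: eqm_mm)
    thus ?thesis using VV eqm_trans by blast
  qed
  have BU: "eqm m B (mm m (mm m U (diagm lam)) (trm U))"
  proof -
    have 1: "eqm m B (mm m idm (mm m B idm))"
      by (rule eqm_sym, rule eqm_trans[OF mm_idm_left mm_idm_right])
    have 2: "eqm m (mm m idm (mm m B idm)) (mm m (mm m Q Q) (mm m B (mm m Q Q)))"
      by (rule eqm_mm[OF eqm_sym[OF QQ] eqm_mm[OF eqm_refl eqm_sym[OF QQ]]])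
    have 3: "mm m (mm m Q Q) (mm m B (mm m Q Q)) = mm m (mm m Q C) Q"
      unfolding C_def by (simp add: mm_assoc)
    have 4: "eqm m (mm m (mm m Q C) Q) (mm m (mm m Q (mm m (mm m V (diagm lam)) (trm V))) Q)"
      using CV by (intro eqm_mm) auto
    have 5: "mm m (mm m Q (mm m (mm m V (diagm lam)) (trm V))) Q = mm m (mm m U (diagm lam)) (trm U)"
      unfolding trU by (simp add: U_def mm_assoc)
    from eqm_trans[OF 1 2] have "eqm m B (mm m (mm m Q C) Q)" unfolding 3 .
    from eqm_trans[OF this 4] show ?thesis unfolding 5 .
  qed
  have "orth_eigendecomp m B U lam" using UU BU orth_eigendecomp_iff by blast
  thus ?case unfolding m_def by blast
qed

definition ip :: "nat \<Rightarrow> (nat \<Rightarrow> real) \<Rightarrow> (nat \<Rightarrow> real) \<Rightarrow> real" where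
  "ip N x y = (\<Sum>I<N. x I * y I)"
definition mv :: "nat \<Rightarrow> (nat \<Rightarrow> nat \<Rightarrow> real) \<Rightarrow> (nat \<Rightarrow> real) \<Rightarrow> nat \<Rightarrow> real" where
  "mv N M z = (\<lambda>I. \<Sum>J<N. M I J * z J)"
definition sqn :: "nat \<Rightarrow> (nat \<Rightarrow> real) \<Rightarrow> real" where
  "sqn N x = (\<Sum>I<N. (x I)\<^sup>2)"
definition hs :: "nat \<Rightarrow> (nat \<Rightarrow> nat \<Rightarrow> real) \<Rightarrow> real" where
  "hs N M = (\<Sum>I<N. \<Sum>J<N. (M I J)\<^sup>2)"
definition sf :: "nat \<Rightarrow> (nat \<Rightarrow> real) \<Rightarrow> (nat \<Rightarrow> nat \<Rightarrow> real) \<Rightarrow> nat \<Rightarrow> nat \<Rightarrow> real" where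
  "sf p a u = (\<lambda>I J. \<Sum>k<p. a k * u k I * u k J)"
definition orthn :: "nat \<Rightarrow> nat \<Rightarrow> (nat \<Rightarrow> nat \<Rightarrow> real) \<Rightarrow> bool" where
  "orthn N p u \<longleftrightarrow> (\<forall>k<p. \<forall>k'<p. ip N (u k) (u k') = (if k = k' then 1 else 0))"

lemma sqn_ip: "sqn N x = ip N x x" unfolding sqn_def ip_def by (simp add: power2_eq_square)
lemma ip_comm: "ip N x y = ip N y x" unfolding ip_def by (simp add: mult.commute)
lemma sqn_nonneg: "0 \<le> sqn N x" unfolding sqn_def by (simp add: sum_nonneg)

lemma sum3swap: "(\<Sum>I<N. \<Sum>k<p. \<Sum>l<q. F I k l) = (\<Sum>k<p. \<Sum>l<q. \<Sum>I<N. (F I k l :: real))"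
proof -
  have "(\<Sum>I<N. \<Sum>k<p. \<Sum>l<q. F I k l) = (\<Sum>k<p. \<Sum>I<N. \<Sum>l<q. F I k l)" by (rule sum.swap)
  also have "\<dots> = (\<Sum>k<p. \<Sum>l<q. \<Sum>I<N. F I k l)" by (intro sum.cong refl sum.swap)
  finally show ?thesis .
qed

lemma ip_comb: "ip N (\<lambda>I. \<Sum>k<p. a k * u k I) y = (\<Sum>k<p. a k * ip N (u k) y)"
proof -
  have "ip N (\<lambda>I. \<Sum>k<p. a k * u k I) y = (\<Sum>I<N. \<Sum>k<p. a k * u k I * y I)"
    unfolding ip_def by (simp add: sum_distrib_right)
  also have "\<dots> = (\<Sum>k<p. \<Sum>I<N. a k * u k I * y I)" by (rule sum.swap)
  also have "\<dots> = (\<Sum>k<p. a k * ip N (u k) y)"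
    unfolding ip_def by (simp add: sum_distrib_left mult.assoc)
  finally show ?thesis .
qed

lemma ip_comb_orth: "orthn N p u \<Longrightarrow> k0 < p \<Longrightarrow> ip N (\<lambda>I. \<Sum>k<p. a k * u k I) (u k0) = a k0"
proof -
  assume o: "orthn N p u" and k0: "k0 < p"
  have "ip N (\<lambda>I. \<Sum>k<p. a k * u k I) (u k0) = (\<Sum>k<p. a k * (if k = k0 then 1 else 0))"
    unfolding ip_comb using o k0 unfolding orthn_def by (intro sum.cong refl) auto
  also have "\<dots> = a k0" using k0 by (simp add: if_distrib cong: if_cong)
  finally show ?thesis .
qed

lemma mv_sf: "mv N (sf p a u) z I = (\<Sum>k<p. a k * u k I * ip N (u k) z)"
proof -
  have "mv N (sf p a u) z I = (\<Sum>J<N. \<Sum>k<p. a k * u k I * (u k J * z J))"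
    unfolding mv_def sf_def by (simp add: sum_distrib_right mult.assoc)
  also have "\<dots> = (\<Sum>k<p. \<Sum>J<N. a k * u k I * (u k J * z J))" by (rule sum.swap)
  also have "\<dots> = (\<Sum>k<p. a k * u k I * ip N (u k) z)"
    unfolding ip_def by (simp add: sum_distrib_left)
  finally show ?thesis .
qed

lemma sqn_comb_orth: "orthn N q v \<Longrightarrow> sqn N (\<lambda>I. \<Sum>l<q. b l * v l I) = (\<Sum>l<q. (b l)\<^sup>2)"
proof -
  assume o: "orthn N q v"
  have "sqn N (\<lambda>I. \<Sum>l<q. b l * v l I) = (\<Sum>l<q. b l * ip N (v l) (\<lambda>I. \<Sum>l<q. b l * v l I))"
    unfolding sqn_ip ip_comb ..
  also have "\<dots> = (\<Sum>l<q. b l * b l)"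
    using o by (intro sum.cong refl) (simp add: ip_comm[of N "v _"] ip_comb_orth)
  finally show ?thesis by (simp add: power2_eq_square)
qed

lemma bessel_id:
  assumes o: "orthn N q v"
  shows "sqn N (\<lambda>I. y I - (\<Sum>l<q. b l * v l I)) =
         sqn N y - (\<Sum>l<q. (ip N y (v l))\<^sup>2) + (\<Sum>l<q. (b l - ip N y (v l))\<^sup>2)"
proof -
  define s where "s = (\<lambda>I. \<Sum>l<q. b l * v l I)"
  have "sqn N (\<lambda>I. y I - s I) = sqn N y - 2 * ip N y s + sqn N s"
    unfolding sqn_def ip_def by (simp add: power2_diff sum_subtractf sum.distrib sum_distrib_left mult.assoc)
  also have "ip N y s = (\<Sum>l<q. b l * ip N y (v l))"
    unfolding s_def by (simp add: ip_comm[of N y] ip_comb)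
  also have "sqn N s = (\<Sum>l<q. (b l)\<^sup>2)" unfolding s_def using sqn_comb_orth[OF o] .
  also have "sqn N y - 2 * (\<Sum>l<q. b l * ip N y (v l)) + (\<Sum>l<q. (b l)\<^sup>2) =
         sqn N y - (\<Sum>l<q. (ip N y (v l))\<^sup>2) + (\<Sum>l<q. (b l - ip N y (v l))\<^sup>2)"
    by (simp add: power2_diff sum_subtractf sum.distrib sum_distrib_left algebra_simps)
  finally show ?thesis unfolding s_def .
qed

lemma bessel:
  assumes o: "orthn N q v"
  shows "(\<Sum>l<q. (ip N y (v l))\<^sup>2) \<le> sqn N y"
proof -
  have "0 \<le> sqn N (\<lambda>I. y I - (\<Sum>l<q. ip N y (v l) * v l I))" by (rule sqn_nonneg)
  thus ?thesis unfolding bessel_id[OF o] by simp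
qed

lemma bessel_lower:
  assumes o: "orthn N q v"
  shows "sqn N y - (\<Sum>l<q. (ip N y (v l))\<^sup>2) \<le> sqn N (\<lambda>I. y I - (\<Sum>l<q. b l * v l I))"
  unfolding bessel_id[OF o] by (simp add: sum_nonneg)

definition frob :: "nat \<Rightarrow> (nat \<Rightarrow> nat \<Rightarrow> real) \<Rightarrow> (nat \<Rightarrow> nat \<Rightarrow> real) \<Rightarrow> real" where
  "frob N X Y = (\<Sum>I<N. \<Sum>J<N. X I J * Y I J)"

lemma frob_sf: "frob N (sf p a u) (sf q b v) = (\<Sum>k<p. \<Sum>l<q. a k * b l * (ip N (u k) (v l))\<^sup>2)"
proof -
  have row: "(\<Sum>J<N. sf p a u I J * sf q b v I J) = (\<Sum>k<p. \<Sum>l<q. a k * b l * ip N (u k) (v l) * (u k I * v l I))" for I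
  proof -
    have "(\<Sum>J<N. sf p a u I J * sf q b v I J) = (\<Sum>J<N. \<Sum>k<p. a k * u k I * (sf q b v I J * u k J))"
      unfolding sf_def[of p] sum_distrib_right by (intro sum.cong refl) (simp add: mult_ac)
    also have "\<dots> = (\<Sum>k<p. \<Sum>J<N. a k * u k I * (sf q b v I J * u k J))" by (rule sum.swap)
    also have "\<dots> = (\<Sum>k<p. a k * u k I * mv N (sf q b v) (u k) I)"
      unfolding mv_def by (simp add: sum_distrib_left)
    also have "\<dots> = (\<Sum>k<p. \<Sum>l<q. a k * b l * ip N (u k) (v l) * (u k I * v l I))"
      unfolding mv_sf by (simp add: sum_distrib_left ip_comm[of N "v _"] mult_ac)
    finally show ?thesis .
  qed
  have "frob N (sf p a u) (sf q b v) = (\<Sum>I<N. \<Sum>k<p. \<Sum>l<q. a k * b l * ip N (u k) (v l) * (u k I * v l I))"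
    unfolding frob_def row ..
  also have "\<dots> = (\<Sum>k<p. \<Sum>l<q. \<Sum>I<N. a k * b l * ip N (u k) (v l) * (u k I * v l I))"
    by (rule sum3swap)
  also have "\<dots> = (\<Sum>k<p. \<Sum>l<q. a k * b l * (ip N (u k) (v l))\<^sup>2)"
    by (simp add: sum_distrib_left[symmetric] ip_def[symmetric] power2_eq_square mult.assoc)
  finally show ?thesis .
qed

lemma hs_frob: "hs N X = frob N X X" unfolding hs_def frob_def by (simp add: power2_eq_square)

lemma frob_comm: "frob N X Y = frob N Y X" unfolding frob_def by (simp add: mult.commute)

lemma hs_diff: "hs N (\<lambda>I J. X I J - Y I J) = frob N X X - 2 * frob N X Y + frob N Y Y"
proof -
  have e: "\<And>I J. (X I J - Y I J)\<^sup>2 = X I J * X I J - 2 * (X I J * Y I J) + Y I J * Y I J"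
    by (simp add: power2_eq_square algebra_simps)
  show ?thesis unfolding hs_def frob_def e by (simp add: sum_subtractf sum.distrib sum_distrib_left)
qed

lemma hs_sf_orth: "orthn N p u \<Longrightarrow> frob N (sf p a u) (sf p a u) = (\<Sum>k<p. (a k)\<^sup>2)"
proof -
  assume o: "orthn N p u"
  have "frob N (sf p a u) (sf p a u) = (\<Sum>k<p. \<Sum>k'<p. a k * a k' * (if k = k' then 1 else 0))"
    unfolding frob_sf using o unfolding orthn_def by (intro sum.cong refl) auto
  also have "\<dots> = (\<Sum>k<p. (a k)\<^sup>2)" by (simp add: if_distrib power2_eq_square cong: if_cong)
  finally show ?thesis .
qed

lemma cs_mv: "sqn N (mv N M z) \<le> hs N M * sqn N z"
proof -
  have "sqn N (mv N M z) = (\<Sum>I<N. (\<Sum>J<N. M I J * z J)\<^sup>2)" unfolding sqn_def mv_def ..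
  also have "\<dots> \<le> (\<Sum>I<N. (\<Sum>J<N. (M I J)\<^sup>2) * (\<Sum>J<N. (z J)\<^sup>2))"
    by (intro sum_mono Cauchy_Schwarz_ineq_sum)
  also have "\<dots> = hs N M * sqn N z" unfolding hs_def sqn_def by (simp add: sum_distrib_right)
  finally show ?thesis .
qed

lemma mv_diff: "mv N (\<lambda>I J. X I J - Y I J) z I = mv N X z I - mv N Y z I"
  unfolding mv_def by (simp add: algebra_simps sum_subtractf)

lemma mvD_u:
  assumes ou: "orthn N p u" and k: "k < p"
  shows "mv N (\<lambda>I J. sf p lam u I J - sf q mu v I J) (u k) I =
         lam k * u k I - (\<Sum>l<q. (mu l * ip N (v l) (u k)) * v l I)"
proof -
  have "(\<Sum>k'<p. lam k' * u k' I * ip N (u k') (u k)) = (\<Sum>k'<p. (lam k' * u k' I) * (if k' = k then 1 else 0))"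
    using ou k unfolding orthn_def by (intro sum.cong refl) auto
  also have "\<dots> = lam k * u k I" using k by (simp add: if_distrib cong: if_cong)
  finally show ?thesis unfolding mv_diff mv_sf by (simp add: mult_ac)
qed

lemma side_bounds:
  fixes lam mu :: "nat \<Rightarrow> real"
  assumes ou: "orthn N p u" and ov: "orthn N q v" and k: "k < p"
  defines "Y \<equiv> (\<lambda>I. lam k * u k I - (\<Sum>l<q. (mu l * ip N (v l) (u k)) * v l I))"
  shows "(lam k)\<^sup>2 * (1 - (\<Sum>l<q. (ip N (u k) (v l))\<^sup>2)) \<le> sqn N Y"
    and "(\<Sum>l<q. ((lam k - mu l) * ip N (u k) (v l))\<^sup>2) \<le> sqn N Y"
    and "0 \<le> 1 - (\<Sum>l<q. (ip N (u k) (v l))\<^sup>2)"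
proof -
  have uk1: "sqn N (u k) = 1" using ou k unfolding orthn_def sqn_ip by simp
  define y where "y = (\<lambda>I. lam k * u k I)"
  have ipy: "ip N y (v l) = lam k * ip N (u k) (v l)" for l
    unfolding y_def ip_def by (simp add: sum_distrib_left mult.assoc)
  have sy: "sqn N y = (lam k)\<^sup>2" unfolding y_def sqn_def using uk1
    by (simp add: power_mult_distrib sum_distrib_left[symmetric] sqn_def)
  have "sqn N y - (\<Sum>l<q. (ip N y (v l))\<^sup>2) \<le> sqn N Y"
    unfolding Y_def using bessel_lower[OF ov, of y "\<lambda>l. mu l * ip N (v l) (u k)"] unfolding y_def .
  thus "(lam k)\<^sup>2 * (1 - (\<Sum>l<q. (ip N (u k) (v l))\<^sup>2)) \<le> sqn N Y"
    unfolding sy ipy by (simp add: power_mult_distrib sum_distrib_left right_diff_distrib)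
  have ipY: "ip N Y (v l) = (lam k - mu l) * ip N (u k) (v l)" if l: "l < q" for l
  proof -
    have "ip N Y (v l) = ip N y (v l) - ip N (\<lambda>I. \<Sum>l<q. (mu l * ip N (v l) (u k)) * v l I) (v l)"
      unfolding Y_def y_def ip_def by (simp add: algebra_simps sum_subtractf)
    also have "\<dots> = lam k * ip N (u k) (v l) - mu l * ip N (v l) (u k)"
      unfolding ipy ip_comb_orth[OF ov l] ..
    finally show ?thesis by (simp add: ip_comm algebra_simps)
  qed
  have "(\<Sum>l<q. (ip N Y (v l))\<^sup>2) \<le> sqn N Y" by (rule bessel[OF ov])
  thus "(\<Sum>l<q. ((lam k - mu l) * ip N (u k) (v l))\<^sup>2) \<le> sqn N Y"
    using ipY by simp
  show "0 \<le> 1 - (\<Sum>l<q. (ip N (u k) (v l))\<^sup>2)"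
    using bessel[OF ov, of "u k"] uk1 by simp
qed

lemma sqn_scale: "sqn N (\<lambda>I. c * x I) = c\<^sup>2 * sqn N x"
  unfolding sqn_def by (simp add: power_mult_distrib sum_distrib_left)

lemma sqn_neg: "sqn N (\<lambda>I. - x I) = sqn N x"
  unfolding sqn_def by simp

lemma norm_tri: "sqrt (sqn N (\<lambda>I. c * x I + y I)) \<le> \<bar>c\<bar> * sqrt (sqn N x) + sqrt (sqn N y)"
proof -
  have "sqrt (sqn N (\<lambda>I. c * x I + y I)) = L2_set (\<lambda>I. c * x I + y I) {..<N}"
    unfolding sqn_def L2_set_def ..
  also have "\<dots> \<le> L2_set (\<lambda>I. c * x I) {..<N} + L2_set y {..<N}" by (rule L2_set_triangle_ineq)
  also have "L2_set (\<lambda>I. c * x I) {..<N} = \<bar>c\<bar> * sqrt (sqn N x)"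
    using sqn_scale[of N c x] unfolding sqn_def L2_set_def by (simp add: real_sqrt_mult)
  also have "L2_set y {..<N} = sqrt (sqn N y)" unfolding sqn_def L2_set_def ..
  finally show ?thesis .
qed

lemma hs_identity:
  fixes a b :: "nat \<Rightarrow> real" and w :: "nat \<Rightarrow> nat \<Rightarrow> real"
  shows "(\<Sum>k<p. (a k)\<^sup>2) - 2 * (\<Sum>k<p. \<Sum>l<q. a k * b l * (w k l)\<^sup>2) + (\<Sum>l<q. (b l)\<^sup>2) =
    (\<Sum>k<p. \<Sum>l<q. (a k - b l)\<^sup>2 * (w k l)\<^sup>2) + (\<Sum>k<p. (a k)\<^sup>2 * (1 - (\<Sum>l<q. (w k l)\<^sup>2)))
    + (\<Sum>l<q. (b l)\<^sup>2 * (1 - (\<Sum>k<p. (w k l)\<^sup>2)))"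
proof -
  have e: "(a k - b l)\<^sup>2 * (w k l)\<^sup>2 = (a k)\<^sup>2 * (w k l)\<^sup>2 - 2 * (a k * b l * (w k l)\<^sup>2) + (b l)\<^sup>2 * (w k l)\<^sup>2" for k l
    by (simp add: power2_diff algebra_simps)
  have sw: "(\<Sum>k<p. \<Sum>l<q. (b l)\<^sup>2 * (w k l)\<^sup>2) = (\<Sum>l<q. (b l)\<^sup>2 * (\<Sum>k<p. (w k l)\<^sup>2))"
    by (subst sum.swap) (simp add: sum_distrib_left)
  have "(\<Sum>k<p. \<Sum>l<q. (a k - b l)\<^sup>2 * (w k l)\<^sup>2) =
     (\<Sum>k<p. (a k)\<^sup>2 * (\<Sum>l<q. (w k l)\<^sup>2)) - 2 * (\<Sum>k<p. \<Sum>l<q. a k * b l * (w k l)\<^sup>2)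
     + (\<Sum>l<q. (b l)\<^sup>2 * (\<Sum>k<p. (w k l)\<^sup>2))"
    unfolding e sw[symmetric] by (simp add: sum.distrib sum_subtractf sum_distrib_left)
  thus ?thesis by (simp add: right_diff_distrib sum_subtractf)
qed

lemma core:
  fixes c L G rho :: real and f :: "real \<Rightarrow> real" and lam mu :: "nat \<Rightarrow> real"
  assumes ou: "orthn N p u" and ov: "orthn N q v"
    and rho: "\<And>z. sqn N z \<le> 1 \<Longrightarrow> sqn N (mv N (\<lambda>I J. sf p lam u I J - sf q mu v I J) z) \<le> rho\<^sup>2"
    and rho0: "0 \<le> rho" and L0: "0 \<le> L" and G0: "0 \<le> G"
    and lamG: "(\<Sum>k<p. (lam k)\<^sup>2) \<le> G\<^sup>2" and muG: "(\<Sum>l<q. (mu l)\<^sup>2) \<le> G\<^sup>2"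
    and rb: "\<And>k l. k < p \<Longrightarrow> l < q \<Longrightarrow>
       ((f (lam k) - c * lam k) - (f (mu l) - c * mu l))\<^sup>2 \<le> L\<^sup>2 * ((lam k)\<^sup>2 + (mu l)\<^sup>2) * (lam k - mu l)\<^sup>2"
    and ra: "\<And>k. k < p \<Longrightarrow> (f (lam k) - c * lam k)\<^sup>2 \<le> L\<^sup>2 * (lam k)\<^sup>2 * (lam k)\<^sup>2"
    and rbb: "\<And>l. l < q \<Longrightarrow> (f (mu l) - c * mu l)\<^sup>2 \<le> L\<^sup>2 * (mu l)\<^sup>2 * (mu l)\<^sup>2"
    and z: "sqn N z \<le> 1"
  shows "sqrt (sqn N (mv N (\<lambda>I J. sf p (\<lambda>k. f (lam k)) u I J - sf q (\<lambda>l. f (mu l)) v I J) z))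
         \<le> (\<bar>c\<bar> + 2 * L * G) * rho"
proof -
  define D where "D = (\<lambda>I J. sf p lam u I J - sf q mu v I J)"
  define a where "a k = f (lam k) - c * lam k" for k
  define b where "b l = f (mu l) - c * mu l" for l
  define R where "R = (\<lambda>I J. sf p a u I J - sf q b v I J)"
  define w where "w k l = ip N (u k) (v l)" for k l
  define m where "m k l = (lam k - mu l) * w k l" for k l
  have sfsplit: "sf n (\<lambda>k. f (g k)) x I J = c * sf n g x I J + sf n (\<lambda>k. f (g k) - c * g k) x I J" for n g x I J
    unfolding sf_def by (simp add: sum_distrib_left algebra_simps sum.distrib[symmetric])
  have Hsplit: "mv N (\<lambda>I J. sf p (\<lambda>k. f (lam k)) u I J - sf q (\<lambda>l. f (mu l)) v I J) z =
        (\<lambda>I. c * mv N D z I + mv N R z I)"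
    unfolding mv_def D_def R_def a_def b_def sfsplit
    by (intro ext) (simp add: algebra_simps sum.distrib sum_subtractf sum_distrib_left)
  have Dz: "sqrt (sqn N (mv N D z)) \<le> rho"
    using rho[OF z] rho0 unfolding D_def by (simp add: real_le_lsqrt real_sqrt_le_iff sqrt_le_D)
  have Du: "sqn N (mv N D (u k)) \<le> rho\<^sup>2" if "k < p" for k
    using rho[of "u k"] ou that unfolding orthn_def sqn_ip D_def by simp
  have Dv: "sqn N (mv N D (v l)) \<le> rho\<^sup>2" if "l < q" for l
    using rho[of "v l"] ov that unfolding orthn_def sqn_ip D_def by simp
  have Yu: "mv N D (u k) = (\<lambda>I. lam k * u k I - (\<Sum>l<q. (mu l * ip N (v l) (u k)) * v l I))" if k: "k < p" for k
    unfolding D_def using mvD_u[OF ou k] by (intro ext) simp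
  have Yv: "mv N D (v l) = (\<lambda>I. - (mu l * v l I - (\<Sum>k<p. (lam k * ip N (u k) (v l)) * u k I)))" if l: "l < q" for l
  proof (intro ext)
    fix I
    have "mv N (\<lambda>I J. sf q mu v I J - sf p lam u I J) (v l) I = mu l * v l I - (\<Sum>k<p. (lam k * ip N (u k) (v l)) * u k I)"
      by (rule mvD_u[OF ov l])
    moreover have "mv N (\<lambda>I J. sf q mu v I J - sf p lam u I J) (v l) I = - mv N D (v l) I"
      unfolding D_def mv_diff by simp
    ultimately show "mv N D (v l) I = - (mu l * v l I - (\<Sum>k<p. (lam k * ip N (u k) (v l)) * u k I))" by simp
  qed
  have mrow: "(\<Sum>l<q. (m k l)\<^sup>2) \<le> rho\<^sup>2" if k: "k < p" for k
    using side_bounds(2)[OF ou ov k, of lam mu] Yu[OF k] Du[OF k] unfolding m_def w_def by simp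
  have sY: "sqn N (mv N D (v l)) = sqn N (\<lambda>I. mu l * v l I - (\<Sum>k<p. (lam k * ip N (u k) (v l)) * u k I))"
    if l: "l < q" for l
    unfolding Yv[OF l] by (rule sqn_neg)
  have mcol: "(\<Sum>k<p. (m k l)\<^sup>2) \<le> rho\<^sup>2" if l: "l < q" for l
  proof -
    have "(\<Sum>k<p. ((mu l - lam k) * ip N (v l) (u k))\<^sup>2) \<le> sqn N (mv N D (v l))"
      unfolding sY[OF l] by (rule side_bounds(2)[OF ov ou l])
    moreover have "((mu l - lam k) * ip N (v l) (u k))\<^sup>2 = (m k l)\<^sup>2" for k
      unfolding m_def w_def by (simp add: ip_comm power2_eq_square algebra_simps)
    ultimately show ?thesis using Dv[OF l] by simp
  qed
  have wrow: "(lam k)\<^sup>2 * (1 - (\<Sum>l<q. (w k l)\<^sup>2)) \<le> rho\<^sup>2" "0 \<le> 1 - (\<Sum>l<q. (w k l)\<^sup>2)" if k: "k < p" for k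
    using side_bounds(1)[OF ou ov k, of lam mu] side_bounds(3)[OF ou ov k] Yu[OF k] Du[OF k] unfolding w_def by simp_all
  have wcol: "(mu l)\<^sup>2 * (1 - (\<Sum>k<p. (w k l)\<^sup>2)) \<le> rho\<^sup>2" "0 \<le> 1 - (\<Sum>k<p. (w k l)\<^sup>2)" if l: "l < q" for l
  proof -
    have "(\<Sum>k<p. (ip N (v l) (u k))\<^sup>2) = (\<Sum>k<p. (w k l)\<^sup>2)" unfolding w_def by (simp add: ip_comm)
    thus "(mu l)\<^sup>2 * (1 - (\<Sum>k<p. (w k l)\<^sup>2)) \<le> rho\<^sup>2" "0 \<le> 1 - (\<Sum>k<p. (w k l)\<^sup>2)"
      using side_bounds(1)[OF ov ou l, of mu lam] side_bounds(3)[OF ov ou l] sY[OF l] Dv[OF l] by simp_all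
  qed
  have hsR: "hs N R = (\<Sum>k<p. \<Sum>l<q. (a k - b l)\<^sup>2 * (w k l)\<^sup>2) + (\<Sum>k<p. (a k)\<^sup>2 * (1 - (\<Sum>l<q. (w k l)\<^sup>2)))
    + (\<Sum>l<q. (b l)\<^sup>2 * (1 - (\<Sum>k<p. (w k l)\<^sup>2)))"
    unfolding R_def hs_diff unfolding hs_sf_orth[OF ou] hs_sf_orth[OF ov] unfolding frob_sf w_def[symmetric]
    by (rule hs_identity)
  have S1: "(\<Sum>k<p. \<Sum>l<q. (a k - b l)\<^sup>2 * (w k l)\<^sup>2) \<le> 2 * L\<^sup>2 * G\<^sup>2 * rho\<^sup>2"
  proof -
    have "(\<Sum>k<p. \<Sum>l<q. (a k - b l)\<^sup>2 * (w k l)\<^sup>2) \<le> (\<Sum>k<p. \<Sum>l<q. L\<^sup>2 * ((lam k)\<^sup>2 + (mu l)\<^sup>2) * (m k l)\<^sup>2)"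
    proof (intro sum_mono)
      fix k l assume "k \<in> {..<p}" "l \<in> {..<q}"
      hence "(a k - b l)\<^sup>2 \<le> L\<^sup>2 * ((lam k)\<^sup>2 + (mu l)\<^sup>2) * (lam k - mu l)\<^sup>2" using rb unfolding a_def b_def by auto
      hence "(a k - b l)\<^sup>2 * (w k l)\<^sup>2 \<le> L\<^sup>2 * ((lam k)\<^sup>2 + (mu l)\<^sup>2) * (lam k - mu l)\<^sup>2 * (w k l)\<^sup>2"
        by (rule mult_right_mono) simp
      thus "(a k - b l)\<^sup>2 * (w k l)\<^sup>2 \<le> L\<^sup>2 * ((lam k)\<^sup>2 + (mu l)\<^sup>2) * (m k l)\<^sup>2"
        unfolding m_def by (simp add: power_mult_distrib mult.assoc)
    qed
    also have "\<dots> = L\<^sup>2 * ((\<Sum>k<p. (lam k)\<^sup>2 * (\<Sum>l<q. (m k l)\<^sup>2)) + (\<Sum>l<q. (mu l)\<^sup>2 * (\<Sum>k<p. (m k l)\<^sup>2)))"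
    proof -
      have "(\<Sum>k<p. \<Sum>l<q. L\<^sup>2 * ((lam k)\<^sup>2 + (mu l)\<^sup>2) * (m k l)\<^sup>2) =
            L\<^sup>2 * ((\<Sum>k<p. \<Sum>l<q. (lam k)\<^sup>2 * (m k l)\<^sup>2) + (\<Sum>k<p. \<Sum>l<q. (mu l)\<^sup>2 * (m k l)\<^sup>2))"
        by (simp add: algebra_simps sum.distrib sum_distrib_left)
      also have "(\<Sum>k<p. \<Sum>l<q. (mu l)\<^sup>2 * (m k l)\<^sup>2) = (\<Sum>l<q. \<Sum>k<p. (mu l)\<^sup>2 * (m k l)\<^sup>2)"
        by (rule sum.swap)
      finally show ?thesis by (simp add: sum_distrib_left)
    qed
    also have "\<dots> \<le> L\<^sup>2 * ((\<Sum>k<p. (lam k)\<^sup>2 * rho\<^sup>2) + (\<Sum>l<q. (mu l)\<^sup>2 * rho\<^sup>2))"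
      by (intro mult_left_mono add_mono sum_mono mult_left_mono) (auto simp: mrow mcol)
    also have "\<dots> = L\<^sup>2 * rho\<^sup>2 * ((\<Sum>k<p. (lam k)\<^sup>2) + (\<Sum>l<q. (mu l)\<^sup>2))"
      by (simp add: sum_distrib_right sum_distrib_left[symmetric] algebra_simps)
    also have "\<dots> \<le> L\<^sup>2 * rho\<^sup>2 * (G\<^sup>2 + G\<^sup>2)"
      by (intro mult_left_mono add_mono lamG muG) simp
    finally show ?thesis by (simp add: algebra_simps)
  qed
  have S2: "(\<Sum>k<p. (a k)\<^sup>2 * (1 - (\<Sum>l<q. (w k l)\<^sup>2))) \<le> L\<^sup>2 * G\<^sup>2 * rho\<^sup>2"
  proof -
    have "(\<Sum>k<p. (a k)\<^sup>2 * (1 - (\<Sum>l<q. (w k l)\<^sup>2))) \<le> (\<Sum>k<p. L\<^sup>2 * (lam k)\<^sup>2 * rho\<^sup>2)"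
    proof (intro sum_mono)
      fix k assume "k \<in> {..<p}"
      hence k: "k < p" by simp
      have "(a k)\<^sup>2 * (1 - (\<Sum>l<q. (w k l)\<^sup>2)) \<le> (L\<^sup>2 * (lam k)\<^sup>2 * (lam k)\<^sup>2) * (1 - (\<Sum>l<q. (w k l)\<^sup>2))"
        using ra[OF k] wrow(2)[OF k] unfolding a_def by (rule mult_right_mono)
      also have "\<dots> = (L\<^sup>2 * (lam k)\<^sup>2) * ((lam k)\<^sup>2 * (1 - (\<Sum>l<q. (w k l)\<^sup>2)))" by simp
      also have "\<dots> \<le> (L\<^sup>2 * (lam k)\<^sup>2) * rho\<^sup>2"
        using wrow(1)[OF k] by (rule mult_left_mono) simp
      finally show "(a k)\<^sup>2 * (1 - (\<Sum>l<q. (w k l)\<^sup>2)) \<le> L\<^sup>2 * (lam k)\<^sup>2 * rho\<^sup>2" .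
    qed
    also have "\<dots> = L\<^sup>2 * rho\<^sup>2 * (\<Sum>k<p. (lam k)\<^sup>2)" by (simp add: sum_distrib_left algebra_simps)
    also have "\<dots> \<le> L\<^sup>2 * rho\<^sup>2 * G\<^sup>2" by (intro mult_left_mono lamG) simp
    finally show ?thesis by (simp add: algebra_simps)
  qed
  have S3: "(\<Sum>l<q. (b l)\<^sup>2 * (1 - (\<Sum>k<p. (w k l)\<^sup>2))) \<le> L\<^sup>2 * G\<^sup>2 * rho\<^sup>2"
  proof -
    have "(\<Sum>l<q. (b l)\<^sup>2 * (1 - (\<Sum>k<p. (w k l)\<^sup>2))) \<le> (\<Sum>l<q. L\<^sup>2 * (mu l)\<^sup>2 * rho\<^sup>2)"
    proof (intro sum_mono)
      fix l assume "l \<in> {..<q}"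
      hence l: "l < q" by simp
      have "(b l)\<^sup>2 * (1 - (\<Sum>k<p. (w k l)\<^sup>2)) \<le> (L\<^sup>2 * (mu l)\<^sup>2 * (mu l)\<^sup>2) * (1 - (\<Sum>k<p. (w k l)\<^sup>2))"
        using rbb[OF l] wcol(2)[OF l] unfolding b_def by (rule mult_right_mono)
      also have "\<dots> = (L\<^sup>2 * (mu l)\<^sup>2) * ((mu l)\<^sup>2 * (1 - (\<Sum>k<p. (w k l)\<^sup>2)))" by simp
      also have "\<dots> \<le> (L\<^sup>2 * (mu l)\<^sup>2) * rho\<^sup>2"
        using wcol(1)[OF l] by (rule mult_left_mono) simp
      finally show "(b l)\<^sup>2 * (1 - (\<Sum>k<p. (w k l)\<^sup>2)) \<le> L\<^sup>2 * (mu l)\<^sup>2 * rho\<^sup>2" .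
    qed
    also have "\<dots> = L\<^sup>2 * rho\<^sup>2 * (\<Sum>l<q. (mu l)\<^sup>2)" by (simp add: sum_distrib_left algebra_simps)
    also have "\<dots> \<le> L\<^sup>2 * rho\<^sup>2 * G\<^sup>2" by (intro mult_left_mono muG) simp
    finally show ?thesis by (simp add: algebra_simps)
  qed
  have hsRb: "hs N R \<le> (2 * L * G * rho)\<^sup>2"
    using S1 S2 S3 unfolding hsR by (simp add: power_mult_distrib)
  have Rz: "sqrt (sqn N (mv N R z)) \<le> 2 * L * G * rho"
  proof -
    have "sqn N (mv N R z) \<le> hs N R * sqn N z" by (rule cs_mv)
    also have "\<dots> \<le> hs N R * 1"
      using z by (intro mult_left_mono) (auto simp: hs_def sum_nonneg)
    also have "\<dots> \<le> (2 * L * G * rho)\<^sup>2" using hsRb by simp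
    finally have "sqrt (sqn N (mv N R z)) \<le> sqrt ((2 * L * G * rho)\<^sup>2)" by (rule real_sqrt_le_mono)
    thus ?thesis using L0 G0 rho0 by simp
  qed
  have "sqrt (sqn N (mv N (\<lambda>I J. sf p (\<lambda>k. f (lam k)) u I J - sf q (\<lambda>l. f (mu l)) v I J) z))
        \<le> \<bar>c\<bar> * sqrt (sqn N (mv N D z)) + sqrt (sqn N (mv N R z))"
    unfolding Hsplit by (rule norm_tri)
  also have "\<dots> \<le> \<bar>c\<bar> * rho + 2 * L * G * rho"
    by (intro add_mono mult_left_mono Dz Rz) simp
  finally show ?thesis by (simp add: algebra_simps)
qed

abbreviation chi :: "nat \<Rightarrow> nat \<Rightarrow> real \<Rightarrow> real" where
  "chi N I \<equiv> indicator (part_int N I)"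

lemma part_int_mem: "0 < N \<Longrightarrow> x \<in> part_int N I \<longleftrightarrow> real I \<le> x * N \<and> x * N < real I + 1"
  unfolding part_int_def by (auto simp: field_simps)

lemma part_sub: "I < N \<Longrightarrow> part_int N I \<subseteq> {0..1}"
proof
  fix x assume I: "I < N" and x: "x \<in> part_int N I"
  have N: "0 < real N" using I by simp
  have "real (Suc I) \<le> real N" using I by linarith
  hence "real (Suc I) / real N \<le> 1" using N by simp
  moreover have "0 \<le> real I / real N" by simp
  moreover have "real I / real N \<le> x" "x < real (Suc I) / real N" using x unfolding part_int_def by auto
  ultimately show "x \<in> {0..1}" by (simp only: atLeastAtMost_iff) linarith
qed

lemma part_disj: "I \<noteq> J \<Longrightarrow> x \<in> part_int N I \<Longrightarrow> x \<notin> part_int N J"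
proof -
  assume IJ: "I \<noteq> J" and x: "x \<in> part_int N I"
  have N: "0 < N" using x unfolding part_int_def by (cases N) auto
  show "x \<notin> part_int N J"
  proof
    assume "x \<in> part_int N J"
    hence "real J \<le> x * N \<and> x * N < real J + 1" "real I \<le> x * N \<and> x * N < real I + 1"
      using x part_int_mem[OF N] by auto
    hence "real I < real J + 1" "real J < real I + 1" by linarith+
    hence "I < J + 1" "J < I + 1" by linarith+
    thus False using IJ by linarith
  qed
qed

lemma chi_mult: "chi N I x * chi N J x = (if I = J then chi N I x else 0)"
  using part_disj[of I J x N] by (auto simp: indicator_def)

lemma chi_sum_le1: "(\<Sum>I<M. chi N I x) \<le> 1"
proof (cases "\<exists>I<M. x \<in> part_int N I")
  case True
  then obtain I where I: "I < M" "x \<in> part_int N I" by blast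
  have "(\<Sum>J<M. chi N J x) = (\<Sum>J<M. if J = I then 1 else 0)"
    using part_disj[of I _ x N] I by (intro sum.cong refl) (auto simp: indicator_def)
  thus ?thesis using I by simp
next
  case False thus ?thesis by (simp add: indicator_def)
qed

lemma chi_meas[measurable]: "chi N I \<in> borel_measurable borel"
  unfolding part_int_def by measurable

lemma chi_int: "integrable lborel (chi N I)"
proof -
  have "real I / real N \<le> real (Suc I) / real N" by (simp add: divide_right_mono)
  thus ?thesis unfolding part_int_def by (intro integrable_real_indicator) (auto simp: emeasure_lborel_Ico)
qed

lemma chi_integral: "I < N \<Longrightarrow> integral\<^sup>L lborel (chi N I) = 1 / N"
proof -
  assume I: "I < N"
  have "real I / real N \<le> real (Suc I) / real N" using I by (simp add: divide_right_mono)
  hence "integral\<^sup>L lborel (chi N I) = real (Suc I) / real N - real I / real N"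
    unfolding part_int_def by (simp add: measure_lborel_Ico)
  thus ?thesis by (simp add: diff_divide_distrib[symmetric])
qed

lemma measure_part: "I < N \<Longrightarrow> measure lborel (part_int N I) = 1 / N"
  using chi_integral[of I N] by simp

lemma chi01: "I < N \<Longrightarrow> indicator {0..1} x * chi N I x = chi N I x"
  using part_sub[of I N] by (auto simp: indicator_def)

lemma chi_le1: "chi N I x \<le> 1" "0 \<le> chi N I x" by (auto simp: indicator_def)

lemma abs_le_1_sq: "\<bar>t::real\<bar> \<le> 1 + t\<^sup>2"
proof -
  have "0 \<le> (\<bar>t\<bar> - 1)\<^sup>2" by simp
  hence "0 \<le> t\<^sup>2 - 2 * \<bar>t\<bar> + 1" by (simp add: power2_diff power2_abs)
  thus ?thesis by (smt (verit) zero_le_power2)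
qed

lemma ind01_int: "integrable lborel (indicator {0..1::real} :: real \<Rightarrow> real)"
  by (intro integrable_real_indicator) auto

definition cf :: "nat \<Rightarrow> (real \<Rightarrow> real) \<Rightarrow> nat \<Rightarrow> real" where
  "cf N \<psi> J = integral\<^sup>L lborel (\<lambda>u. chi N J u * \<psi> u)"

lemma L2_facts:
  assumes "\<psi> \<in> L2_0_1"
  shows L2_meas: "\<psi> \<in> borel_measurable lborel"
    and L2_sq: "integrable lborel (\<lambda>x. indicator {0..1} x * (\<psi> x)\<^sup>2)"
    and L2_1: "integrable lborel (\<lambda>x. indicator {0..1} x * \<psi> x)"
    and L2_chi: "J < N \<Longrightarrow> integrable lborel (\<lambda>x. chi N J x * \<psi> x)"
    and L2_chisq: "J < N \<Longrightarrow> integrable lborel (\<lambda>x. chi N J x * (\<psi> x)\<^sup>2)"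
proof -
  show m[measurable]: "\<psi> \<in> borel_measurable lborel" using assms unfolding L2_0_1_def by simp
  show sq: "integrable lborel (\<lambda>x. indicator {0..1} x * (\<psi> x)\<^sup>2)"
    using assms unfolding L2_0_1_def set_integrable_def by simp
  have B: "integrable lborel (\<lambda>x. indicator {0..1} x + indicator {0..1} x * (\<psi> x)\<^sup>2)"
    by (intro Bochner_Integration.integrable_add ind01_int sq)
  have bnd: "\<bar>a * \<psi> x\<bar> \<le> \<bar>indicator {0..1} x + indicator {0..1} x * (\<psi> x)\<^sup>2\<bar>"
    if "0 \<le> a" "a \<le> indicator {0..1} x" for a x
  proof -
    have "\<bar>a * \<psi> x\<bar> = a * \<bar>\<psi> x\<bar>" using that by (simp add: abs_mult)
    also have "\<dots> \<le> indicator {0..1} x * (1 + (\<psi> x)\<^sup>2)"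
      using that abs_le_1_sq[of "\<psi> x"] by (intro mult_mono) auto
    also have "\<dots> = \<bar>indicator {0..1} x + indicator {0..1} x * (\<psi> x)\<^sup>2\<bar>"
      by (simp add: algebra_simps indicator_def)
    finally show ?thesis .
  qed
  show "integrable lborel (\<lambda>x. indicator {0..1} x * \<psi> x)"
  proof (rule Bochner_Integration.integrable_bound[OF B])
    show "(\<lambda>x. indicator {0..1} x * \<psi> x) \<in> borel_measurable lborel" by measurable
    show "AE x in lborel. norm (indicator {0..1} x * \<psi> x) \<le> norm (indicator {0..1} x + indicator {0..1} x * (\<psi> x)\<^sup>2)"
      by (intro AE_I2) (use bnd in \<open>auto simp: indicator_def\<close>)
  qed
  show "integrable lborel (\<lambda>x. chi N J x * \<psi> x)" if J: "J < N"
  proof (rule Bochner_Integration.integrable_bound[OF B])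
    show "(\<lambda>x. chi N J x * \<psi> x) \<in> borel_measurable lborel" by measurable
    show "AE x in lborel. norm (chi N J x * \<psi> x) \<le> norm (indicator {0..1} x + indicator {0..1} x * (\<psi> x)\<^sup>2)"
    proof (intro AE_I2)
      fix x
      have "chi N J x \<le> indicator {0..1} x" using chi01[OF J, of x] chi_le1[of N J x]
        by (auto simp: indicator_def)
      thus "norm (chi N J x * \<psi> x) \<le> norm (indicator {0..1} x + indicator {0..1} x * (\<psi> x)\<^sup>2)"
        using bnd[of "chi N J x" x] chi_le1 by simp
    qed
  qed
  show "integrable lborel (\<lambda>x. chi N J x * (\<psi> x)\<^sup>2)" if J: "J < N"
  proof (rule Bochner_Integration.integrable_bound[OF sq])
    show "(\<lambda>x. chi N J x * (\<psi> x)\<^sup>2) \<in> borel_measurable lborel" by measurable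
    show "AE x in lborel. norm (chi N J x * (\<psi> x)\<^sup>2) \<le> norm (indicator {0..1} x * (\<psi> x)\<^sup>2)"
    proof (intro AE_I2)
      fix x
      have "chi N J x \<le> indicator {0..1} x" using chi01[OF J, of x] chi_le1[of N J x]
        by (auto simp: indicator_def)
      thus "norm (chi N J x * (\<psi> x)\<^sup>2) \<le> norm (indicator {0..1} x * (\<psi> x)\<^sup>2)"
        using chi_le1[of N J x] by (simp add: abs_mult mult_right_mono)
    qed
  qed
qed

lemma int_op_step:
  assumes psi: "\<psi> \<in> L2_0_1"
  shows "int_op (step_graphon N K) \<psi> v = (\<Sum>I<N. chi N I v * (\<Sum>J<N. K I J * cf N \<psi> J))"
proof -
  have eq: "indicator {0..1} u *\<^sub>R (step_graphon N K v u * \<psi> u) =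
        (\<Sum>I<N. \<Sum>J<N. (K I J * chi N I v) * (chi N J u * \<psi> u))" for u
  proof -
    have "indicator {0..1} u *\<^sub>R (step_graphon N K v u * \<psi> u) =
        (\<Sum>I<N. \<Sum>J<N. (K I J * chi N I v) * ((indicator {0..1} u * chi N J u) * \<psi> u))"
      unfolding step_graphon_def by (simp add: sum_distrib_left sum_distrib_right mult_ac)
    also have "\<dots> = (\<Sum>I<N. \<Sum>J<N. (K I J * chi N I v) * (chi N J u * \<psi> u))"
      by (intro sum.cong refl) (simp add: chi01)
    finally show ?thesis .
  qed
  have "int_op (step_graphon N K) \<psi> v =
        integral\<^sup>L lborel (\<lambda>u. \<Sum>I<N. \<Sum>J<N. (K I J * chi N I v) * (chi N J u * \<psi> u))"
    unfolding int_op_def set_lebesgue_integral_def eq ..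
  also have "\<dots> = (\<Sum>I<N. integral\<^sup>L lborel (\<lambda>u. \<Sum>J<N. (K I J * chi N I v) * (chi N J u * \<psi> u)))"
    using L2_chi[OF psi]
    by (intro Bochner_Integration.integral_sum Bochner_Integration.integrable_sum
        Bochner_Integration.integrable_mult_right) auto
  also have "\<dots> = (\<Sum>I<N. \<Sum>J<N. (K I J * chi N I v) * cf N \<psi> J)"
  proof (intro sum.cong refl)
    fix I
    have "integral\<^sup>L lborel (\<lambda>u. \<Sum>J<N. (K I J * chi N I v) * (chi N J u * \<psi> u)) =
          (\<Sum>J<N. integral\<^sup>L lborel (\<lambda>u. (K I J * chi N I v) * (chi N J u * \<psi> u)))"
      using L2_chi[OF psi]
      by (intro Bochner_Integration.integral_sum Bochner_Integration.integrable_mult_right) auto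
    also have "\<dots> = (\<Sum>J<N. (K I J * chi N I v) * cf N \<psi> J)"
      unfolding cf_def by simp
    finally show "integral\<^sup>L lborel (\<lambda>u. \<Sum>J<N. (K I J * chi N I v) * (chi N J u * \<psi> u)) =
          (\<Sum>J<N. (K I J * chi N I v) * cf N \<psi> J)" .
  qed
  finally show ?thesis by (simp add: sum_distrib_left mult_ac)
qed

lemma step_sq: "(\<Sum>I<N. chi N I x * y I)\<^sup>2 = (\<Sum>I<N. chi N I x * (y I)\<^sup>2)"
proof -
  have "(\<Sum>I<N. chi N I x * y I)\<^sup>2 = (\<Sum>I<N. \<Sum>J<N. (chi N I x * y I) * (chi N J x * y J))"
    by (simp only: power2_eq_square sum_product)
  also have "\<dots> = (\<Sum>I<N. \<Sum>J<N. (chi N I x * chi N J x) * (y I * y J))"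
    by (rule sum.cong[OF refl], rule sum.cong[OF refl]) (simp only: mult.assoc mult.commute mult.left_commute)
  also have "\<dots> = (\<Sum>I<N. \<Sum>J<N. if J = I then chi N I x * (y I)\<^sup>2 else 0)"
    unfolding chi_mult by (intro sum.cong refl) (auto simp: power2_eq_square)
  also have "\<dots> = (\<Sum>I<N. chi N I x * (y I)\<^sup>2)" by simp
  finally show ?thesis .
qed

lemma step_meas[measurable]: "(\<lambda>x. \<Sum>I<N. chi N I x * y I) \<in> borel_measurable lborel"
  by measurable

lemma int_step_sq:
  "integral\<^sup>L lborel (\<lambda>x. indicator {0..1} x * (\<Sum>I<N. chi N I x * y I)\<^sup>2) = (\<Sum>I<N. (y I)\<^sup>2) / N"
  and int_step_sq_int: "integrable lborel (\<lambda>x. indicator {0..1} x * (\<Sum>I<N. chi N I x * y I)\<^sup>2)"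
proof -
  have eq: "indicator {0..1} x * (\<Sum>I<N. chi N I x * y I)\<^sup>2 = (\<Sum>I<N. (y I)\<^sup>2 * chi N I x)" for x
    unfolding step_sq sum_distrib_left
  proof (intro sum.cong refl)
    fix I assume "I \<in> {..<N}"
    hence I: "I < N" by simp
    have "indicator {0..1} x * (chi N I x * (y I)\<^sup>2) = (indicator {0..1} x * chi N I x) * (y I)\<^sup>2"
      by (simp only: mult.assoc)
    also have "\<dots> = chi N I x * (y I)\<^sup>2" by (simp only: chi01[OF I])
    also have "\<dots> = (y I)\<^sup>2 * chi N I x" by (simp only: mult.commute)
    finally show "indicator {0..1} x * (chi N I x * (y I)\<^sup>2) = (y I)\<^sup>2 * chi N I x" .
  qed
  show "integrable lborel (\<lambda>x. indicator {0..1} x * (\<Sum>I<N. chi N I x * y I)\<^sup>2)"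
    unfolding eq by (intro Bochner_Integration.integrable_sum Bochner_Integration.integrable_mult_right chi_int)
  have "integral\<^sup>L lborel (\<lambda>x. indicator {0..1} x * (\<Sum>I<N. chi N I x * y I)\<^sup>2) =
        (\<Sum>I<N. (y I)\<^sup>2 * integral\<^sup>L lborel (chi N I))"
    unfolding eq by (subst Bochner_Integration.integral_sum) (auto intro: chi_int)
  also have "\<dots> = (\<Sum>I<N. (y I)\<^sup>2 / N)" by (intro sum.cong refl) (simp add: measure_part)
  finally show "integral\<^sup>L lborel (\<lambda>x. indicator {0..1} x * (\<Sum>I<N. chi N I x * y I)\<^sup>2) = (\<Sum>I<N. (y I)\<^sup>2) / N"
    by (simp add: sum_divide_distrib)
qed

lemma L2_norm_step: "L2_norm (\<lambda>x. \<Sum>I<N. chi N I x * y I) = sqrt ((\<Sum>I<N. (y I)\<^sup>2) / N)"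
  unfolding L2_norm_def set_lebesgue_integral_def using int_step_sq(1)[of N y] by simp

lemma cf_bound:
  assumes psi: "\<psi> \<in> L2_0_1" and J: "J < N"
  shows "N * (cf N \<psi> J)\<^sup>2 \<le> integral\<^sup>L lborel (\<lambda>x. chi N J x * (\<psi> x)\<^sup>2)"
proof -
  define a where "a = N * cf N \<psi> J"
  have i1[simp]: "integrable lborel (\<lambda>x. chi N J x * (\<psi> x)\<^sup>2)" using L2_chisq[OF psi J] .
  have i2[simp]: "integrable lborel (\<lambda>x. chi N J x * \<psi> x)" using L2_chi[OF psi J] .
  have i3[simp]: "integrable lborel (chi N J)" by (rule chi_int)
  have eq: "chi N J x * (\<psi> x - a)\<^sup>2 = chi N J x * (\<psi> x)\<^sup>2 - 2 * a * (chi N J x * \<psi> x) + a\<^sup>2 * chi N J x" for x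
    by (simp add: power2_diff algebra_simps)
  have "0 \<le> integral\<^sup>L lborel (\<lambda>x. chi N J x * (\<psi> x - a)\<^sup>2)"
    by (intro Bochner_Integration.integral_nonneg) (simp add: indicator_def)
  also have "integral\<^sup>L lborel (\<lambda>x. chi N J x * (\<psi> x - a)\<^sup>2) =
      integral\<^sup>L lborel (\<lambda>x. chi N J x * (\<psi> x)\<^sup>2) - 2 * a * cf N \<psi> J + a\<^sup>2 * (1 / N)"
    unfolding eq cf_def using J by (simp add: measure_part)
  finally have "0 \<le> integral\<^sup>L lborel (\<lambda>x. chi N J x * (\<psi> x)\<^sup>2) - 2 * a * cf N \<psi> J + a\<^sup>2 * (1 / N)" .
  moreover have "N > 0" using J by simp
  ultimately show ?thesis unfolding a_def by (simp add: power2_eq_square field_simps)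
qed

lemma L2_norm_sq: "\<psi> \<in> L2_0_1 \<Longrightarrow> (L2_norm \<psi>)\<^sup>2 = integral\<^sup>L lborel (\<lambda>x. indicator {0..1} x * (\<psi> x)\<^sup>2)"
proof -
  assume "\<psi> \<in> L2_0_1"
  have "0 \<le> integral\<^sup>L lborel (\<lambda>x. indicator {0..1} x * (\<psi> x)\<^sup>2)"
    by (intro Bochner_Integration.integral_nonneg) (simp add: indicator_def)
  thus ?thesis unfolding L2_norm_def set_lebesgue_integral_def by simp
qed

lemma hat_bound:
  assumes psi: "\<psi> \<in> L2_0_1"
  shows "sqn N (\<lambda>J. sqrt N * cf N \<psi> J) \<le> (L2_norm \<psi>)\<^sup>2"
proof -
  have "sqn N (\<lambda>J. sqrt N * cf N \<psi> J) = (\<Sum>J<N. N * (cf N \<psi> J)\<^sup>2)"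
    unfolding sqn_def by (simp add: power_mult_distrib)
  also have "\<dots> \<le> (\<Sum>J<N. integral\<^sup>L lborel (\<lambda>x. chi N J x * (\<psi> x)\<^sup>2))"
    by (intro sum_mono cf_bound[OF psi]) simp
  also have "\<dots> = integral\<^sup>L lborel (\<lambda>x. \<Sum>J<N. chi N J x * (\<psi> x)\<^sup>2)"
    using L2_chisq[OF psi]
    by (subst Bochner_Integration.integral_sum) auto
  also have "\<dots> \<le> integral\<^sup>L lborel (\<lambda>x. indicator {0..1} x * (\<psi> x)\<^sup>2)"
  proof (intro Bochner_Integration.integral_mono)
    show "integrable lborel (\<lambda>x. \<Sum>J<N. chi N J x * (\<psi> x)\<^sup>2)"
      using L2_chisq[OF psi] by (intro Bochner_Integration.integrable_sum) auto
    show "integrable lborel (\<lambda>x. indicator {0..1} x * (\<psi> x)\<^sup>2)" using L2_sq[OF psi] .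
    fix x
    have "(\<Sum>J<N. chi N J x) \<le> indicator {0..1} x"
    proof (cases "x \<in> {0..1}")
      case True thus ?thesis using chi_sum_le1[where M=N and N=N and x=x] by simp
    next
      case False
      hence "chi N J x = 0" if "J < N" for J using part_sub[OF that] by (auto simp: indicator_def)
      thus ?thesis using False by simp
    qed
    hence "(\<Sum>J<N. chi N J x) * (\<psi> x)\<^sup>2 \<le> indicator {0..1} x * (\<psi> x)\<^sup>2"
      by (intro mult_right_mono) simp_all
    thus "(\<Sum>J<N. chi N J x * (\<psi> x)\<^sup>2) \<le> indicator {0..1} x * (\<psi> x)\<^sup>2"
      by (simp only: sum_distrib_right)
  qed
  also have "\<dots> = (L2_norm \<psi>)\<^sup>2" using L2_norm_sq[OF psi] by simp
  finally show ?thesis .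
qed

definition tfun :: "nat \<Rightarrow> (nat \<Rightarrow> real) \<Rightarrow> real \<Rightarrow> real" where
  "tfun N z = (\<lambda>u. \<Sum>J<N. chi N J u * (sqrt N * z J))"

lemma tfun_L2: "tfun N z \<in> L2_0_1"
proof -
  have "tfun N z \<in> borel_measurable lborel" unfolding tfun_def by (rule step_meas)
  moreover have "set_integrable lborel {0..1} (\<lambda>x. (tfun N z x)\<^sup>2)"
    unfolding set_integrable_def real_scaleR_def tfun_def by (rule int_step_sq_int)
  ultimately show ?thesis unfolding L2_0_1_def by simp
qed

lemma sqrt_div_self: "0 < (a::real) \<Longrightarrow> sqrt a / a = 1 / sqrt a"
  by (simp add: field_simps)

lemma tfun_norm: "0 < N \<Longrightarrow> L2_norm (tfun N z) = sqrt (sqn N z)"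
  unfolding tfun_def L2_norm_step sqn_def by (simp add: power_mult_distrib sum_distrib_left[symmetric])

lemma tfun_cf: "K < N \<Longrightarrow> sqrt N * cf N (tfun N z) K = z K"
proof -
  assume K: "K < N"
  have eq: "chi N K u * tfun N z u = (sqrt N * z K) * chi N K u" for u
  proof -
    have "chi N K u * tfun N z u = (\<Sum>J<N. (chi N K u * chi N J u) * (sqrt N * z J))"
      unfolding tfun_def sum_distrib_left by (simp only: mult.assoc)
    also have "\<dots> = (\<Sum>J<N. if K = J then chi N K u * (sqrt N * z K) else 0)"
      unfolding chi_mult by (intro sum.cong refl) auto
    also have "\<dots> = (sqrt N * z K) * chi N K u" using K by simp
    finally show ?thesis .
  qed
  have "cf N (tfun N z) K = (sqrt N * z K) * (1 / N)"
    unfolding cf_def eq using K by (simp add: measure_part)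
  hence "sqrt N * cf N (tfun N z) K = (sqrt N * sqrt N) * z K * (1 / N)" by (simp only: mult.assoc)
  also have "\<dots> = z K" using K by simp
  finally show ?thesis .
qed

lemma mv_cong: "(\<And>J. J < N \<Longrightarrow> z J = z' J) \<Longrightarrow> mv N M z = mv N M z'"
  unfolding mv_def by (intro ext sum.cong) auto

lemma opdiff_norm:
  assumes psi: "\<psi> \<in> L2_0_1" and N: "0 < N"
  shows "L2_norm (op_diff (int_op (step_graphon N K1)) (int_op (step_graphon N K2)) \<psi>) =
         sqrt (sqn N (mv N (\<lambda>I J. (K1 I J - K2 I J) / N) (\<lambda>J. sqrt N * cf N \<psi> J)))"
proof -
  define y where "y I = (\<Sum>J<N. (K1 I J - K2 I J) * cf N \<psi> J)" for I
  have T: "op_diff (int_op (step_graphon N K1)) (int_op (step_graphon N K2)) \<psi> = (\<lambda>v. \<Sum>I<N. chi N I v * y I)"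
    unfolding op_diff_def int_op_step[OF psi] y_def
    by (intro ext) (simp add: sum_subtractf[symmetric] right_diff_distrib left_diff_distrib)
  have m: "mv N (\<lambda>I J. (K1 I J - K2 I J) / N) (\<lambda>J. sqrt N * cf N \<psi> J) I = y I / sqrt N" for I
  proof -
    have sd: "sqrt (real N) / real N = 1 / sqrt (real N)" using N by (simp add: sqrt_div_self)
    have "(K1 I J - K2 I J) / N * (sqrt N * cf N \<psi> J) = (K1 I J - K2 I J) * cf N \<psi> J * (sqrt N / N)" for J
      by (simp add: field_simps)
    hence "\<And>J. (K1 I J - K2 I J) / N * (sqrt N * cf N \<psi> J) = (K1 I J - K2 I J) * cf N \<psi> J / sqrt N"
      unfolding sd by simp
    thus ?thesis unfolding mv_def y_def by (simp add: sum_divide_distrib)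
  qed
  show ?thesis unfolding T L2_norm_step sqn_def m
    by (simp add: power_divide sum_divide_distrib)
qed

lemma L2_norm_nonneg: "0 \<le> L2_norm \<psi>"
  unfolding L2_norm_def set_lebesgue_integral_def
  by (simp add: Bochner_Integration.integral_nonneg indicator_def)

lemma opnorm_char:
  fixes K1 K2 :: "nat \<Rightarrow> nat \<Rightarrow> real"
  assumes N: "0 < N"
  defines "T \<equiv> op_diff (int_op (step_graphon N K1)) (int_op (step_graphon N K2))"
  defines "M \<equiv> (\<lambda>I J. (K1 I J - K2 I J) / N)"
  shows opnorm_lower: "\<And>z. sqn N z \<le> 1 \<Longrightarrow> sqrt (sqn N (mv N M z)) \<le> L2_opnorm T"
    and opnorm_upper: "\<And>B. (\<And>z. sqn N z \<le> 1 \<Longrightarrow> sqrt (sqn N (mv N M z)) \<le> B) \<Longrightarrow> L2_opnorm T \<le> B"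
proof -
  define S where "S = {\<psi> \<in> L2_0_1. L2_norm \<psi> \<le> 1}"
  have val: "L2_norm (T \<psi>) = sqrt (sqn N (mv N M (\<lambda>J. sqrt N * cf N \<psi> J)))" if "\<psi> \<in> S" for \<psi>
    using opdiff_norm[OF _ N] that unfolding S_def T_def M_def by simp
  have hatS: "sqn N (\<lambda>J. sqrt N * cf N \<psi> J) \<le> 1" if "\<psi> \<in> S" for \<psi>
  proof -
    have "sqn N (\<lambda>J. sqrt N * cf N \<psi> J) \<le> (L2_norm \<psi>)\<^sup>2" using hat_bound that unfolding S_def by simp
    also have "\<dots> \<le> 1" using that unfolding S_def
      by (intro power_le_one) (auto simp: L2_norm_nonneg)
    finally show ?thesis .
  qed
  have bdd: "bdd_above ((\<lambda>\<psi>. L2_norm (T \<psi>)) ` S)"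
  proof (rule bdd_aboveI2)
    fix \<psi> assume "\<psi> \<in> S"
    have "sqn N (mv N M (\<lambda>J. sqrt N * cf N \<psi> J)) \<le> hs N M * sqn N (\<lambda>J. sqrt N * cf N \<psi> J)"
      by (rule cs_mv)
    also have "\<dots> \<le> hs N M * 1" using hatS[OF \<open>\<psi> \<in> S\<close>]
      by (intro mult_left_mono) (auto simp: hs_def sum_nonneg)
    finally show "L2_norm (T \<psi>) \<le> sqrt (hs N M)" unfolding val[OF \<open>\<psi> \<in> S\<close>] by simp
  qed
  have tS: "tfun N z \<in> S" if "sqn N z \<le> 1" for z
    unfolding S_def using tfun_L2 tfun_norm[OF N] that by simp
  have L2op: "L2_opnorm T = (SUP \<psi>\<in>S. L2_norm (T \<psi>))" unfolding L2_opnorm_def S_def ..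
  show "sqrt (sqn N (mv N M z)) \<le> L2_opnorm T" if z: "sqn N z \<le> 1" for z
  proof -
    have "mv N M (\<lambda>J. sqrt N * cf N (tfun N z) J) = mv N M z"
      by (rule mv_cong) (simp add: tfun_cf)
    hence "sqrt (sqn N (mv N M z)) = L2_norm (T (tfun N z))" using val[OF tS[OF z]] by simp
    also have "\<dots> \<le> L2_opnorm T" unfolding L2op by (rule cSUP_upper[OF tS[OF z] bdd])
    finally show ?thesis .
  qed
  show "L2_opnorm T \<le> B" if H: "\<And>z. sqn N z \<le> 1 \<Longrightarrow> sqrt (sqn N (mv N M z)) \<le> B" for B
    unfolding L2op
  proof (rule cSUP_least)
    show "S \<noteq> {}" using tS[of "\<lambda>_. 0"] by (auto simp: sqn_def)
    fix \<psi> assume "\<psi> \<in> S"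
    thus "L2_norm (T \<psi>) \<le> B" unfolding val[OF \<open>\<psi> \<in> S\<close>] using H hatS by blast
  qed
qed

lemma blk_div: "0 < m \<Longrightarrow> I \<in> {i*m..<i*m+m} \<Longrightarrow> I div m = (i::nat)"
  by (intro div_nat_eqI) (auto simp: mult.commute)

lemma ind_blocks:
  assumes n: "0 < n" and m: "0 < m"
  shows "(\<Sum>I\<in>{i*m..<i*m+m}. chi (n*m) I u) = chi n i u"
proof -
  have N: "0 < n * m" using n m by simp
  have memn: "u \<in> part_int n i \<longleftrightarrow> real (i*m) \<le> u * real (n*m) \<and> u * real (n*m) < real (i*m) + m"
  proof -
    have "u \<in> part_int n i \<longleftrightarrow> real i \<le> u * n \<and> u * n < real i + 1" by (rule part_int_mem[OF n])
    also have "\<dots> \<longleftrightarrow> real i * m \<le> u * n * m \<and> u * n * m < (real i + 1) * m"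
      using m by simp
    finally show ?thesis by (simp add: algebra_simps)
  qed
  show ?thesis
  proof (cases "u \<in> part_int n i")
    case True
    define I0 where "I0 = nat \<lfloor>u * real (n*m)\<rfloor>"
    have h: "real (i*m) \<le> u * real (n*m)" "u * real (n*m) < real (i*m) + m" using True memn by auto
    have "0 \<le> real (i*m)" by simp
    hence "0 \<le> u * real (n*m)" using h(1) by (rule order_trans)
    hence fl0: "0 \<le> \<lfloor>u * real (n*m)\<rfloor>" by simp
    have rI0: "real I0 = of_int \<lfloor>u * real (n*m)\<rfloor>" unfolding I0_def using fl0 by simp
    have "real I0 \<le> u * real (n*m)" "u * real (n*m) < real I0 + 1" unfolding rI0 by linarith+
    hence I0mem: "u \<in> part_int (n*m) I0" using part_int_mem[OF N] by simp
    have "of_int (int (i*m)) \<le> u * real (n*m)" using h(1) by simp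
    hence "int (i*m) \<le> \<lfloor>u * real (n*m)\<rfloor>" by (simp add: le_floor_iff)
    hence lo: "i*m \<le> I0" unfolding I0_def by (metis nat_int nat_mono)
    have "\<lfloor>u * real (n*m)\<rfloor> < int (i*m + m)" using h(2) by (simp add: floor_less_iff)
    hence hi: "I0 < i*m + m" unfolding I0_def using fl0 by (metis nat_less_iff)
    have "(\<Sum>I\<in>{i*m..<i*m+m}. chi (n*m) I u) = (\<Sum>I\<in>{i*m..<i*m+m}. if I = I0 then 1 else 0)"
      using I0mem part_disj[of I0 _ u "n*m"] by (intro sum.cong refl) (auto simp: indicator_def)
    also have "\<dots> = 1" using lo hi by simp
    finally show ?thesis using True by simp
  next
    case False
    have "chi (n*m) I u = 0" if I: "I \<in> {i*m..<i*m+m}" for I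
    proof (rule ccontr)
      assume "chi (n*m) I u \<noteq> 0"
      hence "u \<in> part_int (n*m) I" by (simp add: indicator_def split: if_splits)
      hence a: "real I \<le> u * real (n*m)" "u * real (n*m) < real I + 1" using part_int_mem[OF N] by auto
      have "i*m \<le> I" "I + 1 \<le> i*m + m" using I by auto
      hence "real (i*m) \<le> real I" "real (I + 1) \<le> real (i*m + m)" by (simp only: of_nat_le_iff)+
      hence "real (i*m) \<le> real I" "real I + 1 \<le> real (i*m) + m" by simp_all
      hence "u \<in> part_int n i" using a memn by linarith
      thus False using False by simp
    qed
    thus ?thesis using False by simp
  qed
qed

lemma step_graphon_cong: "(\<And>i j. i < n \<Longrightarrow> j < n \<Longrightarrow> B i j = B' i j) \<Longrightarrow> step_graphon n B = step_graphon n B'"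
  unfolding step_graphon_def by (intro ext sum.cong refl) auto

lemma step_blowup:
  assumes n: "0 < n" and m: "0 < m"
  shows "step_graphon n B = step_graphon (n*m) (\<lambda>I J. B (I div m) (J div m))"
proof (intro ext)
  fix u v
  have inner: "(\<Sum>J<n*m. B i (J div m) * chi (n*m) J v) = (\<Sum>j<n. B i j * chi n j v)" for i
  proof -
    have "(\<Sum>J<n*m. B i (J div m) * chi (n*m) J v) = (\<Sum>j<n. \<Sum>J\<in>{j*m..<j*m+m}. B i (J div m) * chi (n*m) J v)"
      by (rule sum.nat_group[symmetric])
    also have "\<dots> = (\<Sum>j<n. \<Sum>J\<in>{j*m..<j*m+m}. B i j * chi (n*m) J v)"
      using blk_div[OF m] by (intro sum.cong refl) auto
    also have "\<dots> = (\<Sum>j<n. B i j * chi n j v)"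
      by (simp add: sum_distrib_left[symmetric] ind_blocks[OF n m])
    finally show ?thesis .
  qed
  have "step_graphon (n*m) (\<lambda>I J. B (I div m) (J div m)) u v =
        (\<Sum>I<n*m. chi (n*m) I u * (\<Sum>J<n*m. B (I div m) (J div m) * chi (n*m) J v))"
    unfolding step_graphon_def sum_distrib_left by (intro sum.cong refl) (simp only: ac_simps)
  also have "\<dots> = (\<Sum>I<n*m. chi (n*m) I u * (\<Sum>j<n. B (I div m) j * chi n j v))"
    unfolding inner ..
  also have "\<dots> = (\<Sum>i<n. \<Sum>I\<in>{i*m..<i*m+m}. chi (n*m) I u * (\<Sum>j<n. B (I div m) j * chi n j v))"
    by (rule sum.nat_group[symmetric])
  also have "\<dots> = (\<Sum>i<n. \<Sum>I\<in>{i*m..<i*m+m}. chi (n*m) I u * (\<Sum>j<n. B i j * chi n j v))"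
    using blk_div[OF m] by (intro sum.cong refl) auto
  also have "\<dots> = (\<Sum>i<n. chi n i u * (\<Sum>j<n. B i j * chi n j v))"
    by (simp add: sum_distrib_right[symmetric] ind_blocks[OF n m])
  also have "\<dots> = step_graphon n B u v"
    unfolding step_graphon_def sum_distrib_left by (intro sum.cong refl) (simp only: ac_simps)
  finally show "step_graphon n B u v = step_graphon (n*m) (\<lambda>I J. B (I div m) (J div m)) u v" ..
qed

lemma mat_fun_repr:
  assumes "sym_mat n B"
  shows "\<exists>U lam. orth_eigendecomp n B U lam \<and>
     (\<forall>f. mat_fun f n B = (\<lambda>i j. if i < n \<and> j < n then (\<Sum>k<n. f (lam k) * U i k * U j k) else 0))"
proof -
  define Q where "Q = (\<lambda>p. case p of (U, lam) \<Rightarrow> orth_eigendecomp n B U lam)"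
  have "\<exists>p. Q p" using spectral[OF assms] unfolding Q_def by auto
  hence q: "Q (SOME p. Q p)" by (rule someI_ex)
  obtain U lam where p: "(SOME p. Q p) = (U, lam)" by (cases "SOME p. Q p") auto
  have "Q (U, lam)" using q p by simp
  hence "orth_eigendecomp n B U lam" unfolding Q_def by simp
  moreover have "mat_fun f n B = (\<lambda>i j. if i < n \<and> j < n then (\<Sum>k<n. f (lam k) * U i k * U j k) else 0)" for f
    using p unfolding mat_fun_def Q_def by simp
  ultimately show ?thesis by blast
qed

lemma eig_bound:
  assumes pi: "\<pi> permutes {..<n}"
    and od: "orth_eigendecomp n (perm_mat \<pi> \<Delta>) U lam"
    and opn: "mat_opnorm n (scale_mat n \<Delta>) \<le> G"
    and k: "k < n"
  shows "\<bar>real n * lam k\<bar> \<le> G"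
proof -
  define x where "x i = U i k" for i
  define y where "y a = x (inv_into UNIV \<pi> a)" for a
  have ortho: "\<And>i j. i<n \<Longrightarrow> j<n \<Longrightarrow> (\<Sum>p<n. U p i * U p j) = (if i = j then 1 else 0)"
    and dec: "\<And>i j. i<n \<Longrightarrow> j<n \<Longrightarrow> perm_mat \<pi> \<Delta> i j = (\<Sum>p<n. lam p * U i p * U j p)"
    using od unfolding orth_eigendecomp_def by auto
  have x1: "(\<Sum>i<n. (x i)\<^sup>2) = 1" using ortho[OF k k] unfolding x_def by (simp add: power2_eq_square)
  have Px: "(\<Sum>j<n. perm_mat \<pi> \<Delta> i j * x j) = lam k * x i" if i: "i < n" for i
  proof -
    have "(\<Sum>j<n. perm_mat \<pi> \<Delta> i j * x j) = (\<Sum>j<n. \<Sum>p<n. lam p * U i p * (U j p * U j k))"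
      unfolding x_def using dec[OF i] by (simp add: sum_distrib_right mult.assoc)
    also have "\<dots> = (\<Sum>p<n. \<Sum>j<n. lam p * U i p * (U j p * U j k))" by (rule sum.swap)
    also have "\<dots> = (\<Sum>p<n. lam p * U i p * (if p = k then 1 else 0))"
      using ortho k by (intro sum.cong refl) (simp add: sum_distrib_left[symmetric])
    also have "\<dots> = lam k * x i" using k unfolding x_def by (simp add: if_distrib cong: if_cong)
    finally show ?thesis .
  qed
  have inv_pi: "inv_into UNIV \<pi> permutes {..<n}" using pi by (rule permutes_inv)
  have y1: "(\<Sum>a<n. (y a)\<^sup>2) = 1"
    unfolding y_def using sum.permute[OF inv_pi, of "\<lambda>i. (x i)\<^sup>2"] x1 by (simp add: comp_def)
  have Dy: "(\<Sum>j<n. \<Delta> a j * y j) = lam k * y a" if a: "a < n" for a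
  proof -
    define i where "i = inv_into UNIV \<pi> a"
    have i: "i < n" unfolding i_def using permutes_in_image[OF inv_pi] a by simp
    have ai: "a = \<pi> i" unfolding i_def using permutes_inverses(1)[OF pi] by simp
    have "(\<Sum>j<n. \<Delta> a j * y j) = (\<Sum>j<n. \<Delta> a (\<pi> j) * y (\<pi> j))"
      using sum.permute[OF pi, of "\<lambda>j. \<Delta> a j * y j"] by (simp add: comp_def)
    also have "\<dots> = (\<Sum>j<n. perm_mat \<pi> \<Delta> i j * x j)"
      unfolding y_def perm_mat_def ai using permutes_inverses(2)[OF pi] by simp
    also have "\<dots> = lam k * x i" by (rule Px[OF i])
    also have "\<dots> = lam k * y a" unfolding y_def i_def ..
    finally show ?thesis .
  qed
  define X where "X = {x :: nat \<Rightarrow> complex. (\<Sum>i<n. (cmod (x i))\<^sup>2) \<le> 1}"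
  define F where "F = (\<lambda>x::nat \<Rightarrow> complex. sqrt (\<Sum>i<n. (cmod (\<Sum>j<n. complex_of_real (scale_mat n \<Delta> i j) * x j))\<^sup>2))"
  have opn': "mat_opnorm n (scale_mat n \<Delta>) = (SUP x\<in>X. F x)" unfolding mat_opnorm_def X_def F_def ..
  define yc where "yc j = complex_of_real (y j)" for j
  have ycX: "yc \<in> X" unfolding X_def yc_def using y1 by simp
  have Fy: "F yc = \<bar>real n * lam k\<bar>"
  proof -
    have "cmod (\<Sum>j<n. complex_of_real (scale_mat n \<Delta> i j) * yc j) = \<bar>real n * lam k * y i\<bar>" if "i < n" for i
    proof -
      have "(\<Sum>j<n. complex_of_real (scale_mat n \<Delta> i j) * yc j) = complex_of_real (real n * (\<Sum>j<n. \<Delta> i j * y j))"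
        unfolding yc_def scale_mat_def by (simp add: sum_distrib_left mult.assoc)
      also have "\<dots> = complex_of_real (real n * lam k * y i)" using Dy[OF that] by (simp add: mult.assoc)
      finally have eq: "(\<Sum>j<n. complex_of_real (scale_mat n \<Delta> i j) * yc j) = complex_of_real (real n * lam k * y i)" .
      show ?thesis unfolding eq by (rule norm_of_real)
    qed
    hence "F yc = sqrt (\<Sum>i<n. (real n * lam k * y i)\<^sup>2)" unfolding F_def by (simp add: power2_abs)
    also have "\<dots> = sqrt ((real n * lam k)\<^sup>2 * (\<Sum>i<n. (y i)\<^sup>2))"
      by (simp add: power_mult_distrib sum_distrib_left)
    also have "\<dots> = \<bar>real n * lam k\<bar>" using y1 by simp
    finally show ?thesis .
  qed
  have bdd: "bdd_above (F ` X)"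
  proof (rule bdd_aboveI2)
    fix x assume "x \<in> X"
    hence xb: "cmod (x j) \<le> 1" if "j < n" for j
    proof -
      have "(cmod (x j))\<^sup>2 \<le> (\<Sum>i<n. (cmod (x i))\<^sup>2)" using that by (intro member_le_sum) auto
      also have "\<dots> \<le> 1" using \<open>x \<in> X\<close> unfolding X_def by simp
      finally show ?thesis by (simp add: power_le_one_iff)
    qed
    have "cmod (\<Sum>j<n. complex_of_real (scale_mat n \<Delta> i j) * x j) \<le> (\<Sum>j<n. \<bar>scale_mat n \<Delta> i j\<bar>)" for i
    proof -
      have "cmod (\<Sum>j<n. complex_of_real (scale_mat n \<Delta> i j) * x j) \<le> (\<Sum>j<n. cmod (complex_of_real (scale_mat n \<Delta> i j) * x j))"
        by (rule norm_sum)
      also have "\<dots> \<le> (\<Sum>j<n. \<bar>scale_mat n \<Delta> i j\<bar>)"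
      proof (intro sum_mono)
        fix j assume "j \<in> {..<n}"
        hence "cmod (x j) \<le> 1" using xb by simp
        thus "cmod (complex_of_real (scale_mat n \<Delta> i j) * x j) \<le> \<bar>scale_mat n \<Delta> i j\<bar>"
          by (simp add: norm_mult mult_left_le)
      qed
      finally show ?thesis .
    qed
    hence "(\<Sum>i<n. (cmod (\<Sum>j<n. complex_of_real (scale_mat n \<Delta> i j) * x j))\<^sup>2) \<le> (\<Sum>i<n. (\<Sum>j<n. \<bar>scale_mat n \<Delta> i j\<bar>)\<^sup>2)"
      by (intro sum_mono power_mono) auto
    thus "F x \<le> sqrt (\<Sum>i<n. (\<Sum>j<n. \<bar>scale_mat n \<Delta> i j\<bar>)\<^sup>2)" unfolding F_def by simp
  qed
  have "\<bar>real n * lam k\<bar> \<le> mat_opnorm n (scale_mat n \<Delta>)"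
    unfolding opn' Fy[symmetric] by (rule cSUP_upper[OF ycX bdd])
  thus ?thesis using opn by simp
qed

lemma r_bound:
  fixes h h' :: "real \<Rightarrow> real" and G L :: real
  assumes der: "\<forall>x \<in> {-G..G}. (h has_real_derivative h' x) (at x within {-G..G})"
    and lip: "L-lipschitz_on {-G..G} h'"
    and x: "x \<in> {-G..G}" and y: "y \<in> {-G..G}"
  shows "\<bar>(h x - h' 0 * x) - (h y - h' 0 * y)\<bar> \<le> L * max \<bar>x\<bar> \<bar>y\<bar> * \<bar>x - y\<bar>"
proof -
  define S where "S = {min x y .. max x y}"
  have SG: "S \<subseteq> {-G..G}" unfolding S_def using x y by auto
  have G0: "0 \<in> {-G..G}" using x by auto
  have L0: "0 \<le> L" using lip unfolding lipschitz_on_def by simp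
  have "norm ((\<lambda>t. h t - h' 0 * t) x - (\<lambda>t. h t - h' 0 * t) y) \<le> (L * max \<bar>x\<bar> \<bar>y\<bar>) * norm (x - y)"
  proof (rule field_differentiable_bound[of S _ "\<lambda>z. h' z - h' 0"])
    show "convex S" unfolding S_def by (rule convex_real_interval)
    fix z assume z: "z \<in> S"
    have "(h has_field_derivative h' z) (at z within {-G..G})" using der SG z by auto
    hence "(h has_field_derivative h' z) (at z within S)" using SG by (rule DERIV_subset)
    thus "((\<lambda>t. h t - h' 0 * t) has_field_derivative h' z - h' 0) (at z within S)"
      by (auto intro!: derivative_eq_intros)
    have "norm (h' z - h' 0) \<le> L * norm (z - 0)"
      using SG z G0 by (intro lipschitz_on_normD[OF lip]) auto
    also have "\<dots> \<le> L * max \<bar>x\<bar> \<bar>y\<bar>" using z L0 unfolding S_def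
      by (intro mult_left_mono) auto
    finally show "norm (h' z - h' 0) \<le> L * max \<bar>x\<bar> \<bar>y\<bar>" .
  next
    show "x \<in> S" "y \<in> S" unfolding S_def by auto
  qed
  thus ?thesis by simp
qed

lemma side_repr:
  fixes U :: "nat \<Rightarrow> nat \<Rightarrow> real"
  assumes m: "0 < m" and N: "N = max n 1 * m"
    and U: "\<And>k k'. k<n \<Longrightarrow> k'<n \<Longrightarrow> (\<Sum>i<n. U i k * U i k') = (if k = k' then 1 else 0)"
  shows "orthn N n (\<lambda>k I. U (I div m) k / sqrt m)"
    and "\<And>a B. (\<And>i j. i<n \<Longrightarrow> j<n \<Longrightarrow> B i j = real n * (\<Sum>k<n. a k * U i k * U j k)) \<Longrightarrow>
           step_graphon n B = step_graphon N (\<lambda>I J. real N * sf n a (\<lambda>k I. U (I div m) k / sqrt m) I J)"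
proof -
  define u where "u = (\<lambda>k I. U (I div m) k / sqrt m)"
  have uu: "u k I * u k' I = U (I div m) k * U (I div m) k' / m" for k k' I
    unfolding u_def using m by (simp add: field_simps)
  show "orthn N n (\<lambda>k I. U (I div m) k / sqrt m)"
  proof (cases "n = 0")
    case True thus ?thesis unfolding orthn_def by simp
  next
    case False
    hence N': "N = n * m" using N by simp
    show ?thesis unfolding orthn_def u_def[symmetric]
    proof (intro allI impI)
      fix k k' assume k: "k < n" and k': "k' < n"
      have "ip N (u k) (u k') = (\<Sum>I<n*m. U (I div m) k * U (I div m) k' / m)"
        unfolding ip_def N' uu ..
      also have "\<dots> = (\<Sum>i<n. \<Sum>I\<in>{i*m..<i*m+m}. U (I div m) k * U (I div m) k' / m)"
        by (rule sum.nat_group[symmetric])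
      also have "\<dots> = (\<Sum>i<n. \<Sum>I\<in>{i*m..<i*m+m}. U i k * U i k' / m)"
        using blk_div[OF m] by (intro sum.cong refl) auto
      also have "\<dots> = (\<Sum>i<n. U i k * U i k')" using m by simp
      also have "\<dots> = (if k = k' then 1 else 0)" using U[OF k k'] .
      finally show "ip N (u k) (u k') = (if k = k' then 1 else 0)" .
    qed
  qed
  fix a B assume B: "\<And>i j. i<n \<Longrightarrow> j<n \<Longrightarrow> B i j = real n * (\<Sum>k<n. a k * U i k * U j k)"
  show "step_graphon n B = step_graphon N (\<lambda>I J. real N * sf n a (\<lambda>k I. U (I div m) k / sqrt m) I J)"
  proof (cases "n = 0")
    case True thus ?thesis unfolding step_graphon_def sf_def by simp
  next
    case False
    hence n: "0 < n" and N': "N = n * m" using N by auto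
    have "step_graphon n B = step_graphon (n*m) (\<lambda>I J. B (I div m) (J div m))"
      by (rule step_blowup[OF n m])
    also have "\<dots> = step_graphon N (\<lambda>I J. real N * sf n a u I J)"
      unfolding N'
    proof (rule step_graphon_cong)
      fix I J assume I: "I < n * m" and J: "J < n * m"
      have Id: "I div m < n" "J div m < n" using I J by (simp_all add: less_mult_imp_div_less)
      have "B (I div m) (J div m) = real n * (\<Sum>k<n. a k * U (I div m) k * U (J div m) k)" using B Id by simp
      also have "\<dots> = real (n * m) * (\<Sum>k<n. a k * (U (I div m) k * U (J div m) k / m))"
        using m by (simp add: sum_distrib_left sum_divide_distrib field_simps)
      also have "\<dots> = real (n * m) * sf n a u I J"
        unfolding sf_def u_def using m by (simp add: field_simps)
      finally show "B (I div m) (J div m) = real (n * m) * sf n a u I J" .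
    qed
    finally show ?thesis unfolding u_def .
  qed
qed

lemma lam_sum_bound:
  fixes lam :: "nat \<Rightarrow> real"
  assumes b: "\<And>k. k < n \<Longrightarrow> \<bar>real n * lam k\<bar> \<le> G"
  shows "(\<Sum>k<n. (lam k)\<^sup>2) \<le> G\<^sup>2" and "\<And>k. k < n \<Longrightarrow> lam k \<in> {-G..G}"
proof -
  show "lam k \<in> {-G..G}" if k: "k < n" for k
  proof -
    have "1 \<le> real n" using k by simp
    hence "\<bar>lam k\<bar> \<le> \<bar>real n * lam k\<bar>" by (simp add: abs_mult mult_le_cancel_right1)
    thus ?thesis using b[OF k] by auto
  qed
  show "(\<Sum>k<n. (lam k)\<^sup>2) \<le> G\<^sup>2"
  proof (cases "n = 0")
    case True
    thus ?thesis by simp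
  next
    case False
    hence n1: "1 \<le> real n" by simp
    have G0: "0 \<le> G" using b[of 0] False by (meson abs_ge_zero order_trans not_gr_zero)
    have "(real n)\<^sup>2 * (\<Sum>k<n. (lam k)\<^sup>2) = (\<Sum>k<n. (real n * lam k)\<^sup>2)"
      by (simp add: sum_distrib_left power_mult_distrib)
    also have "\<dots> \<le> (\<Sum>k<n. G\<^sup>2)"
    proof (intro sum_mono)
      fix k assume "k \<in> {..<n}"
      hence "\<bar>real n * lam k\<bar> \<le> G" using b by simp
      thus "(real n * lam k)\<^sup>2 \<le> G\<^sup>2" by (metis abs_ge_zero power2_abs power_mono)
    qed
    also have "\<dots> = real n * G\<^sup>2" by simp
    also have "\<dots> \<le> (real n)\<^sup>2 * G\<^sup>2" using n1 by (intro mult_right_mono) (auto simp: power2_eq_square)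
    finally have "(real n)\<^sup>2 * (\<Sum>k<n. (lam k)\<^sup>2) \<le> (real n)\<^sup>2 * G\<^sup>2" .
    thus ?thesis using n1 by simp
  qed
qed

theorem theorem5p6:
  fixes \<Gamma> :: nat and h :: "real \<Rightarrow> real"
  assumes h_C1: "\<exists>h' L. (\<forall>x \<in> {-real \<Gamma>..real \<Gamma>}.
                     (h has_real_derivative h' x) (at x within {-real \<Gamma>..real \<Gamma>}))
                   \<and> L-lipschitz_on {-real \<Gamma>..real \<Gamma>} h'"
    and h0: "h 0 = 0"
  shows "\<exists>C>0. \<forall>n1 n2 (\<Delta>1 :: nat \<Rightarrow> nat \<Rightarrow> real) (\<Delta>2 :: nat \<Rightarrow> nat \<Rightarrow> real) \<pi>1 \<pi>2.
           sym_mat n1 \<Delta>1 \<longrightarrow> sym_mat n2 \<Delta>2 \<longrightarrow>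
           mat_opnorm n1 (scale_mat (real n1) \<Delta>1) \<le> real \<Gamma> \<longrightarrow>
           mat_opnorm n2 (scale_mat (real n2) \<Delta>2) \<le> real \<Gamma> \<longrightarrow>
           \<pi>1 permutes {..<n1} \<longrightarrow> \<pi>2 permutes {..<n2} \<longrightarrow>
           L2_opnorm (op_diff
              (int_op (step_graphon n1 (scale_mat (real n1) (mat_fun h n1 (perm_mat \<pi>1 \<Delta>1)))))
              (int_op (step_graphon n2 (scale_mat (real n2) (mat_fun h n2 (perm_mat \<pi>2 \<Delta>2))))))
           \<le> C * L2_opnorm (op_diff
              (int_op (step_graphon n1 (perm_mat \<pi>1 (scale_mat (real n1) \<Delta>1))))
              (int_op (step_graphon n2 (perm_mat \<pi>2 (scale_mat (real n2) \<Delta>2)))))"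
proof -
  obtain h' L where der: "\<forall>x \<in> {-real \<Gamma>..real \<Gamma>}. (h has_real_derivative h' x) (at x within {-real \<Gamma>..real \<Gamma>})"
    and lip: "L-lipschitz_on {-real \<Gamma>..real \<Gamma>} h'" using h_C1 by blast
  define G where "G = real \<Gamma>"
  define c where "c = h' 0"
  have L0: "0 \<le> L" using lip unfolding lipschitz_on_def by simp
  have G0: "0 \<le> G" by (simp add: G_def)
  define C where "C = \<bar>c\<bar> + 2 * L * G + 1"
  have Cpos: "C > 0" using L0 G0 unfolding C_def by (simp add: add_nonneg_pos)
  have rb: "((h x - c * x) - (h y - c * y))\<^sup>2 \<le> L\<^sup>2 * (x\<^sup>2 + y\<^sup>2) * (x - y)\<^sup>2"
    if x: "x \<in> {-G..G}" and y: "y \<in> {-G..G}" for x y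
  proof -
    have a: "\<bar>(h x - c * x) - (h y - c * y)\<bar> \<le> L * max \<bar>x\<bar> \<bar>y\<bar> * \<bar>x - y\<bar>"
      using r_bound[OF der lip] x y unfolding G_def c_def by blast
    have "((h x - c * x) - (h y - c * y))\<^sup>2 \<le> (L * max \<bar>x\<bar> \<bar>y\<bar> * \<bar>x - y\<bar>)\<^sup>2"
      using a by (metis abs_ge_zero power2_abs power_mono)
    also have "\<dots> = L\<^sup>2 * (max \<bar>x\<bar> \<bar>y\<bar>)\<^sup>2 * (x - y)\<^sup>2" by (simp add: power_mult_distrib)
    also have "\<dots> \<le> L\<^sup>2 * (x\<^sup>2 + y\<^sup>2) * (x - y)\<^sup>2"
    proof -
      have "(max \<bar>x\<bar> \<bar>y\<bar>)\<^sup>2 \<le> x\<^sup>2 + y\<^sup>2" by (cases "\<bar>x\<bar> \<le> \<bar>y\<bar>") (simp_all add: max_def)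
      thus ?thesis by (intro mult_right_mono mult_left_mono) auto
    qed
    finally show ?thesis .
  qed
  have ra: "(h x - c * x)\<^sup>2 \<le> L\<^sup>2 * x\<^sup>2 * x\<^sup>2" if x: "x \<in> {-G..G}" for x
    using rb[OF x, of 0] G0 h0 by (simp add: mult.assoc)
  show ?thesis
  proof (intro exI[of _ C] conjI allI impI)
    show "C > 0" by (rule Cpos)
    fix n1 n2 :: nat and \<Delta>1 \<Delta>2 :: "nat \<Rightarrow> nat \<Rightarrow> real" and \<pi>1 \<pi>2
    assume sym1: "sym_mat n1 \<Delta>1" and sym2: "sym_mat n2 \<Delta>2"
      and opn1: "mat_opnorm n1 (scale_mat (real n1) \<Delta>1) \<le> real \<Gamma>"
      and opn2: "mat_opnorm n2 (scale_mat (real n2) \<Delta>2) \<le> real \<Gamma>"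
      and pi1: "\<pi>1 permutes {..<n1}" and pi2: "\<pi>2 permutes {..<n2}"
    have symP: "sym_mat n (perm_mat \<pi> \<Delta>)" if "sym_mat n \<Delta>" "\<pi> permutes {..<n}" for n \<Delta> \<pi>
      using that permutes_in_image[OF that(2)] unfolding sym_mat_def perm_mat_def by auto
    obtain U1 lam1 where od1: "orth_eigendecomp n1 (perm_mat \<pi>1 \<Delta>1) U1 lam1"
      and mf1: "\<And>f. mat_fun f n1 (perm_mat \<pi>1 \<Delta>1) = (\<lambda>i j. if i < n1 \<and> j < n1 then (\<Sum>k<n1. f (lam1 k) * U1 i k * U1 j k) else 0)"
      using mat_fun_repr[OF symP[OF sym1 pi1]] by blast
    obtain U2 lam2 where od2: "orth_eigendecomp n2 (perm_mat \<pi>2 \<Delta>2) U2 lam2"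
      and mf2: "\<And>f. mat_fun f n2 (perm_mat \<pi>2 \<Delta>2) = (\<lambda>i j. if i < n2 \<and> j < n2 then (\<Sum>k<n2. f (lam2 k) * U2 i k * U2 j k) else 0)"
      using mat_fun_repr[OF symP[OF sym2 pi2]] by blast
    define m1 where "m1 = max n2 1"
    define m2 where "m2 = max n1 1"
    define N where "N = max n1 1 * max n2 1"
    have N0: "0 < N" unfolding N_def by (simp add: less_max_iff_disj)
    have m10: "0 < m1" and m20: "0 < m2" unfolding m1_def m2_def by (simp_all add: less_max_iff_disj)
    have N1: "N = max n1 1 * m1" and N2: "N = max n2 1 * m2" unfolding N_def m1_def m2_def by simp_all
    have o1: "\<And>k k'. k<n1 \<Longrightarrow> k'<n1 \<Longrightarrow> (\<Sum>i<n1. U1 i k * U1 i k') = (if k = k' then 1 else 0)"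
      using od1 unfolding orth_eigendecomp_def by blast
    have o2: "\<And>k k'. k<n2 \<Longrightarrow> k'<n2 \<Longrightarrow> (\<Sum>i<n2. U2 i k * U2 i k') = (if k = k' then 1 else 0)"
      using od2 unfolding orth_eigendecomp_def by blast
    define u where "u = (\<lambda>k I. U1 (I div m1) k / sqrt m1)"
    define v where "v = (\<lambda>k I. U2 (I div m2) k / sqrt m2)"
    note sr1 = side_repr[OF m10 N1 o1, folded u_def]
    note sr2 = side_repr[OF m20 N2 o2, folded v_def]
    have dec1: "\<And>i j. i<n1 \<Longrightarrow> j<n1 \<Longrightarrow> perm_mat \<pi>1 \<Delta>1 i j = (\<Sum>k<n1. lam1 k * U1 i k * U1 j k)"
      using od1 unfolding orth_eigendecomp_def by blast
    have dec2: "\<And>i j. i<n2 \<Longrightarrow> j<n2 \<Longrightarrow> perm_mat \<pi>2 \<Delta>2 i j = (\<Sum>k<n2. lam2 k * U2 i k * U2 j k)"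
      using od2 unfolding orth_eigendecomp_def by blast
    have Lh1: "step_graphon n1 (scale_mat (real n1) (mat_fun h n1 (perm_mat \<pi>1 \<Delta>1))) =
               step_graphon N (\<lambda>I J. real N * sf n1 (\<lambda>k. h (lam1 k)) u I J)"
    proof (rule sr1(2))
      fix i j assume ij: "i < n1" "j < n1"
      have "mat_fun h n1 (perm_mat \<pi>1 \<Delta>1) i j = (\<Sum>k<n1. h (lam1 k) * U1 i k * U1 j k)"
        unfolding mf1 using ij by (subst if_P) auto
      thus "scale_mat (real n1) (mat_fun h n1 (perm_mat \<pi>1 \<Delta>1)) i j = real n1 * (\<Sum>k<n1. h (lam1 k) * U1 i k * U1 j k)"
        unfolding scale_mat_def by simp
    qed
    have Lh2: "step_graphon n2 (scale_mat (real n2) (mat_fun h n2 (perm_mat \<pi>2 \<Delta>2))) =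
               step_graphon N (\<lambda>I J. real N * sf n2 (\<lambda>k. h (lam2 k)) v I J)"
      by (rule sr2(2)) (auto simp: scale_mat_def mf2)
    have LA1: "step_graphon n1 (perm_mat \<pi>1 (scale_mat (real n1) \<Delta>1)) =
               step_graphon N (\<lambda>I J. real N * sf n1 lam1 u I J)"
    proof (rule sr1(2))
      fix i j assume ij: "i < n1" "j < n1"
      show "perm_mat \<pi>1 (scale_mat (real n1) \<Delta>1) i j = real n1 * (\<Sum>k<n1. lam1 k * U1 i k * U1 j k)"
        using dec1[OF ij] unfolding scale_mat_def perm_mat_def by simp
    qed
    have LA2: "step_graphon n2 (perm_mat \<pi>2 (scale_mat (real n2) \<Delta>2)) =
               step_graphon N (\<lambda>I J. real N * sf n2 lam2 v I J)"
    proof (rule sr2(2))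
      fix i j assume ij: "i < n2" "j < n2"
      show "perm_mat \<pi>2 (scale_mat (real n2) \<Delta>2) i j = real n2 * (\<Sum>k<n2. lam2 k * U2 i k * U2 j k)"
        using dec2[OF ij] unfolding scale_mat_def perm_mat_def by simp
    qed
    have Mfix: "(\<lambda>I J. (real N * X I J - real N * Y I J) / real N) = (\<lambda>I J. X I J - Y I J)" for X Y
      using N0 by (intro ext) (simp add: right_diff_distrib[symmetric])
    define rho where "rho = L2_opnorm (op_diff (int_op (step_graphon N (\<lambda>I J. real N * sf n1 lam1 u I J)))
                                               (int_op (step_graphon N (\<lambda>I J. real N * sf n2 lam2 v I J))))"
    have rhoz: "sqrt (sqn N (mv N (\<lambda>I J. sf n1 lam1 u I J - sf n2 lam2 v I J) z)) \<le> rho" if "sqn N z \<le> 1" for z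
      using opnorm_lower[OF N0 that, of "\<lambda>I J. real N * sf n1 lam1 u I J" "\<lambda>I J. real N * sf n2 lam2 v I J"]
      unfolding rho_def Mfix .
    have rho0: "0 \<le> rho"
    proof -
      have "sqn N (\<lambda>_. 0) \<le> 1" by (simp add: sqn_def)
      from rhoz[OF this] show ?thesis by (simp add: mv_def sqn_def)
    qed
    have rho2: "sqn N (mv N (\<lambda>I J. sf n1 lam1 u I J - sf n2 lam2 v I J) z) \<le> rho\<^sup>2" if "sqn N z \<le> 1" for z
      using rhoz[OF that] by (rule sqrt_le_D)
    have eb1: "\<And>k. k < n1 \<Longrightarrow> \<bar>real n1 * lam1 k\<bar> \<le> G"
      using eig_bound[OF pi1 od1] opn1 unfolding G_def by blast
    have eb2: "\<And>k. k < n2 \<Longrightarrow> \<bar>real n2 * lam2 k\<bar> \<le> G"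
      using eig_bound[OF pi2 od2] opn2 unfolding G_def by blast
    have ls1: "(\<Sum>k<n1. (lam1 k)\<^sup>2) \<le> G\<^sup>2" by (rule lam_sum_bound(1)[of n1 lam1 G, OF eb1])
    have ls2: "(\<Sum>k<n2. (lam2 k)\<^sup>2) \<le> G\<^sup>2" by (rule lam_sum_bound(1)[of n2 lam2 G, OF eb2])
    have lin1: "lam1 k \<in> {-G..G}" if "k < n1" for k by (rule lam_sum_bound(2)[of n1 lam1 G, OF eb1 that])
    have lin2: "lam2 k \<in> {-G..G}" if "k < n2" for k by (rule lam_sum_bound(2)[of n2 lam2 G, OF eb2 that])
    have core_app: "sqrt (sqn N (mv N (\<lambda>I J. sf n1 (\<lambda>k. h (lam1 k)) u I J - sf n2 (\<lambda>l. h (lam2 l)) v I J) z))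
         \<le> (\<bar>c\<bar> + 2 * L * G) * rho" if z: "sqn N z \<le> 1" for z
    proof (rule core[OF sr1(1) sr2(1) rho2 rho0 L0 G0 ls1 ls2 _ _ _ z])
      fix k l assume "k < n1" "l < n2"
      thus "((h (lam1 k) - c * lam1 k) - (h (lam2 l) - c * lam2 l))\<^sup>2 \<le> L\<^sup>2 * ((lam1 k)\<^sup>2 + (lam2 l)\<^sup>2) * (lam1 k - lam2 l)\<^sup>2"
        by (intro rb lin1 lin2)
    next
      fix k assume "k < n1"
      thus "(h (lam1 k) - c * lam1 k)\<^sup>2 \<le> L\<^sup>2 * (lam1 k)\<^sup>2 * (lam1 k)\<^sup>2" by (intro ra lin1)
    next
      fix l assume "l < n2"
      thus "(h (lam2 l) - c * lam2 l)\<^sup>2 \<le> L\<^sup>2 * (lam2 l)\<^sup>2 * (lam2 l)\<^sup>2" by (intro ra lin2)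
    qed
    have "L2_opnorm (op_diff (int_op (step_graphon N (\<lambda>I J. real N * sf n1 (\<lambda>k. h (lam1 k)) u I J)))
                             (int_op (step_graphon N (\<lambda>I J. real N * sf n2 (\<lambda>k. h (lam2 k)) v I J))))
          \<le> (\<bar>c\<bar> + 2 * L * G) * rho"
      by (rule opnorm_upper[OF N0]) (unfold Mfix, rule core_app)
    also have "\<dots> \<le> C * rho" unfolding C_def using rho0 by (intro mult_right_mono) auto
    finally show "L2_opnorm (op_diff
              (int_op (step_graphon n1 (scale_mat (real n1) (mat_fun h n1 (perm_mat \<pi>1 \<Delta>1)))))
              (int_op (step_graphon n2 (scale_mat (real n2) (mat_fun h n2 (perm_mat \<pi>2 \<Delta>2))))))
           \<le> C * L2_opnorm (op_diff
              (int_op (step_graphon n1 (perm_mat \<pi>1 (scale_mat (real n1) \<Delta>1))))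
              (int_op (step_graphon n2 (perm_mat \<pi>2 (scale_mat (real n2) \<Delta>2)))))"
      unfolding Lh1 Lh2 LA1 LA2 rho_def .
  qed
qed

end
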